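(* Let $\mathbf{W}$ and $X_W$ be as in the context. Let $I_1,I_2,\mathcal I_1,\mathcal I_2\subset\mathbb{S}^1$ be pairwise disjoint open arcs, and let $D_i,\mathcal{D}_i\subset\mathbf{W}$ ($i=1,2$) be compact subsets with $D_i\subset[-2,2]\times I_i\times[1,3]$ and $\mathcal{D}_i\subset[-2,2]\times\mathcal{I}_i\times[1,3]$. Then there is a smooth family $X_W^t$, $t\in[0,2]$, of nowhere-vanishing vector fields on $\mathbf{W}$, each equal to $\partial_z$ near $\partial\mathbf{W}$, with $X_W^0=X_W$ and $X_W^2=\partial_z$, such that: $X_W^t=\partial_z$ on $D_1\cup D_2$ for all $t\in[1,2]$; $X_W^t=X_W$ on $\mathcal D_1\cup\mathcal D_2$ for all $t\in[0,1]$; and for every $t\in(0,2]$ the vector field $X_W^t$ has no closed orbits and no trapped orbits (every trajectory enters and exits $\mathbf{W}$).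
   Context: $\mathbf{W}=[-2,2]\times\mathbb{S}^1\times[1,3]$ with coordinates $(z,\theta,r)$. $X_W=f(z,r)\partial_\theta+g(z,r)\partial_z$, where $f,g$ are smooth functions satisfying: $f$ is odd and $g$ is even in $z$; $f=0$ and $g=1$ near $\partial\mathbf{W}$; $g\ge0$ and $g=0$ exactly on $\{|z|=1,\ r=2\}$; $f\ge0$ for $z>0$ and $f=1$ on $\{1/4\le z\le7/4,\ 5/4\le r\le 11/4\}$. A trajectory meeting $\{z=-2\}$ enters, one meeting $\{z=2\}$ exits; a trapped orbit is one that stays in $\mathbf{W}$ for all positive (or all negative) time. *)

theory Defs
  imports "HOL-Analysis.Analysis"
begin

fun Ck_on :: "nat \<Rightarrow> 'a::euclidean_space set \<Rightarrow> ('a \<Rightarrow> 'b::real_normed_vector) \<Rightarrow> bool" where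
  "Ck_on 0 U F = continuous_on U F"
| "Ck_on (Suc k) U F =
     (F differentiable_on U \<and> continuous_on U F \<and>
      (\<forall>b\<in>Basis. Ck_on k U (\<lambda>x. frechet_derivative F (at x) b)))"

definition smooth_open :: "'a::euclidean_space set \<Rightarrow> ('a \<Rightarrow> 'b::real_normed_vector) \<Rightarrow> bool" where
  "smooth_open U F \<longleftrightarrow> open U \<and> (\<forall>k. Ck_on k U F)"

definition smooth_on_set :: "'a::euclidean_space set \<Rightarrow> ('a \<Rightarrow> 'b::real_normed_vector) \<Rightarrow> bool" where
  "smooth_on_set S F \<longleftrightarrow> (\<exists>U G. S \<subseteq> U \<and> smooth_open U G \<and> (\<forall>x\<in>S. G x = F x))"

text \<open>The circle S^1 is the unit circle in the complex plane, with angle coordinate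
  theta via cis theta. An open arc is the image of an open interval of angles of length at most 2 pi.\<close>
definition open_arc :: "complex set \<Rightarrow> bool" where
  "open_arc I \<longleftrightarrow> (\<exists>a b. a < b \<and> b \<le> a + 2 * pi \<and> I = cis ` {a<..<b})"

text \<open>Covering map from lifted coordinates (z, theta, r) to W.\<close>
definition Phi :: "real \<times> real \<times> real \<Rightarrow> real \<times> complex \<times> real" where
  "Phi p = (case p of (z, \<theta>, r) \<Rightarrow> (z, cis \<theta>, r))"

definition Wlift :: "(real \<times> real \<times> real) set" where
  "Wlift = {-2..2} \<times> UNIV \<times> {1..3}"

definition near_bdry :: "real \<Rightarrow> real \<times> real \<times> real \<Rightarrow> bool" where
  "near_bdry e p = (case p of (z, \<theta>, r) \<Rightarrow> \<bar>z\<bar> \<ge> 2 - e \<or> r \<le> 1 + e \<or> r \<ge> 3 - e)"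

text \<open>A vector field on W given in lifted coordinates: X (z,theta,r) = (dz, dtheta, dr),
  2 pi-periodic in theta. A trajectory (integral curve) on a set of times T, staying in W.\<close>
definition is_traj :: "(real \<times> real \<times> real \<Rightarrow> real \<times> real \<times> real) \<Rightarrow> real set \<Rightarrow> (real \<Rightarrow> real \<times> real \<times> real) \<Rightarrow> bool" where
  "is_traj X T \<gamma> \<longleftrightarrow> (\<forall>s\<in>T. \<gamma> s \<in> Wlift \<and> (\<gamma> has_vector_derivative X (\<gamma> s)) (at s within T))"

definition has_closed_orbit :: "(real \<times> real \<times> real \<Rightarrow> real \<times> real \<times> real) \<Rightarrow> bool" where
  "has_closed_orbit X \<longleftrightarrow> (\<exists>\<gamma> T. is_traj X UNIV \<gamma> \<and> T > 0 \<and> (\<forall>s. Phi (\<gamma> (s + T)) = Phi (\<gamma> s)))"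

definition has_trapped_orbit :: "(real \<times> real \<times> real \<Rightarrow> real \<times> real \<times> real) \<Rightarrow> bool" where
  "has_trapped_orbit X \<longleftrightarrow> (\<exists>\<gamma>. is_traj X {0..} \<gamma> \<or> is_traj X {..0} \<gamma>)"

end

theory Submission
  imports Defs
begin

lemma Ck_cont: "Ck_on k U F \<Longrightarrow> continuous_on U F"
  by (cases k) (simp_all only: Ck_on.simps)

lemma Ck_deriv:
  assumes "open U" "Ck_on (Suc k) U F" "x \<in> U"
  shows "(F has_derivative frechet_derivative F (at x)) (at x)"
proof -
  have "F differentiable_on U" using assms(2) by (simp only: Ck_on.simps)
  then have "F differentiable (at x within U)" using assms(3) by (simp only: differentiable_on_def)
  then have "F differentiable (at x)" using assms(1,3) by (metis at_within_open)
  then show ?thesis by (simp only: frechet_derivative_works)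
qed

lemma Ck_cong:
  assumes "Ck_on k U F" "open U" "\<And>x. x \<in> U \<Longrightarrow> F x = G x"
  shows "Ck_on k U G"
  using assms
proof (induction k arbitrary: F G)
  case 0 
  have "continuous_on U F" using 0(1) by (simp only: Ck_on.simps)
  then have "continuous_on U G" using continuous_on_cong[of U U F G] 0(3) by blast
  then show ?case by (simp only: Ck_on.simps)
next
  case (Suc k)
  have D: "(G has_derivative frechet_derivative F (at x)) (at x)" if "x \<in> U" for x
    using has_derivative_transform_within_open[OF Ck_deriv[OF Suc.prems(2,1) that] Suc.prems(2) that Suc.prems(3)] .
  have FD: "frechet_derivative G (at x) = frechet_derivative F (at x)" if "x \<in> U" for x
    using D[OF that] frechet_derivative_at by metis
  have 1: "G differentiable_on U"
    using D Suc.prems(2) by (meson differentiable_at_imp_differentiable_on differentiable_def)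
  have 2: "continuous_on U G" using 1 differentiable_imp_continuous_on by blast
  have 3: "\<forall>b\<in>Basis. Ck_on k U (\<lambda>x. frechet_derivative G (at x) b)"
  proof
    fix b :: 'a assume b: "b \<in> Basis"
    have "Ck_on k U (\<lambda>x. frechet_derivative F (at x) b)" using Suc.prems(1) b by (simp only: Ck_on.simps)
    then show "Ck_on k U (\<lambda>x. frechet_derivative G (at x) b)"
      using Suc.IH[of "\<lambda>x. frechet_derivative F (at x) b" "\<lambda>x. frechet_derivative G (at x) b"] Suc.prems(2) FD by simp
  qed
  show ?case using 1 2 3 by (simp only: Ck_on.simps)
qed

lemma Ck_mono: "Ck_on (Suc k) U F \<Longrightarrow> Ck_on k U F"
proof (induction k arbitrary: F)
  case 0 then show ?case by (simp only: Ck_on.simps)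
next
  case (Suc k)
  have "F differentiable_on U" "continuous_on U F" "\<forall>b\<in>Basis. Ck_on (Suc k) U (\<lambda>x. frechet_derivative F (at x) b)"
    using Suc.prems Ck_on.simps(2)[of "Suc k" U F] by blast+
  then show ?case using Suc.IH Ck_on.simps(2)[of k U F] by blast
qed

lemma Ck_Suc_intro:
  assumes "open U" "\<And>x. x \<in> U \<Longrightarrow> (F has_derivative F' x) (at x)"
    "\<And>b. b \<in> Basis \<Longrightarrow> Ck_on k U (\<lambda>x. F' x b)"
  shows "Ck_on (Suc k) U F"
proof -
  have FD: "frechet_derivative F (at x) = F' x" if "x \<in> U" for x
    using assms(2)[OF that] frechet_derivative_at by metis
  have 1: "F differentiable_on U"
    using assms(2) by (meson differentiable_at_imp_differentiable_on differentiable_def)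
  have 2: "continuous_on U F" using 1 differentiable_imp_continuous_on by blast
  have 3: "\<forall>b\<in>Basis. Ck_on k U (\<lambda>x. frechet_derivative F (at x) b)"
  proof
    fix b :: 'a assume b: "b \<in> Basis"
    show "Ck_on k U (\<lambda>x. frechet_derivative F (at x) b)"
      by (rule Ck_cong[OF assms(3)[OF b] assms(1)]) (simp add: FD)
  qed
  show ?thesis using 1 2 3 by (simp only: Ck_on.simps)
qed

lemma Ck_derivs:
  assumes "Ck_on (Suc k) U F" "b \<in> Basis"
  shows "Ck_on k U (\<lambda>x. frechet_derivative F (at x) b)"
  using assms Ck_on.simps(2)[of k U F] by blast

lemma Ck_const: "open U \<Longrightarrow> Ck_on k U (\<lambda>x. c)"
proof (induction k arbitrary: c)
  case 0 then show ?case by (simp only: Ck_on.simps continuous_on_const)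
next
  case (Suc k)
  show ?case
    by (rule Ck_Suc_intro[where F'="\<lambda>x h. 0"]) (auto intro: Suc)
qed

lemma Ck_linear: "open U \<Longrightarrow> bounded_linear L \<Longrightarrow> Ck_on k U L"
proof (induction k)
  case 0 then show ?case by (simp only: Ck_on.simps linear_continuous_on)
next
  case (Suc k)
  show ?case
    by (rule Ck_Suc_intro[where F'="\<lambda>x h. L h"]) (auto intro: Ck_const Suc bounded_linear_imp_has_derivative)
qed

lemma Ck_add: "open U \<Longrightarrow> Ck_on k U F \<Longrightarrow> Ck_on k U G \<Longrightarrow> Ck_on k U (\<lambda>x. F x + G x)"
proof (induction k arbitrary: F G)
  case 0 then show ?case by (simp only: Ck_on.simps continuous_on_add)
next
  case (Suc k)
  show ?case
  proof (rule Ck_Suc_intro[where F'="\<lambda>x h. frechet_derivative F (at x) h + frechet_derivative G (at x) h"])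
    show "open U" by fact
    fix x assume "x \<in> U"
    show "((\<lambda>x. F x + G x) has_derivative (\<lambda>h. frechet_derivative F (at x) h + frechet_derivative G (at x) h)) (at x)"
      by (rule has_derivative_add[OF Ck_deriv[OF Suc.prems(1,2) \<open>x\<in>U\<close>] Ck_deriv[OF Suc.prems(1,3) \<open>x\<in>U\<close>]])
  next
    fix b :: 'a assume b: "b \<in> Basis"
    show "Ck_on k U (\<lambda>x. frechet_derivative F (at x) b + frechet_derivative G (at x) b)"
      by (rule Suc.IH[OF Suc.prems(1) Ck_derivs[OF Suc.prems(2) b] Ck_derivs[OF Suc.prems(3) b]])
  qed
qed

lemma Ck_scaleR: "open U \<Longrightarrow> Ck_on k U F \<Longrightarrow> Ck_on k U G \<Longrightarrow> Ck_on k U (\<lambda>x. F x *\<^sub>R G x)"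
proof (induction k arbitrary: F G)
  case 0 then show ?case by (simp only: Ck_on.simps continuous_on_scaleR)
next
  case (Suc k)
  show ?case
  proof (rule Ck_Suc_intro[where F'="\<lambda>x h. F x *\<^sub>R frechet_derivative G (at x) h + frechet_derivative F (at x) h *\<^sub>R G x"])
    show "open U" by fact
    fix x assume "x \<in> U"
    show "((\<lambda>x. F x *\<^sub>R G x) has_derivative (\<lambda>h. F x *\<^sub>R frechet_derivative G (at x) h + frechet_derivative F (at x) h *\<^sub>R G x)) (at x)"
      by (rule has_derivative_scaleR[OF Ck_deriv[OF Suc.prems(1,2) \<open>x\<in>U\<close>] Ck_deriv[OF Suc.prems(1,3) \<open>x\<in>U\<close>]])
  next
    fix b :: 'a assume b: "b \<in> Basis"
    show "Ck_on k U (\<lambda>x. F x *\<^sub>R frechet_derivative G (at x) b + frechet_derivative F (at x) b *\<^sub>R G x)"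
      by (rule Ck_add[OF Suc.prems(1) Suc.IH[OF Suc.prems(1) Ck_mono[OF Suc.prems(2)] Ck_derivs[OF Suc.prems(3) b]]
           Suc.IH[OF Suc.prems(1) Ck_derivs[OF Suc.prems(2) b] Ck_mono[OF Suc.prems(3)]]])
  qed
qed

lemma Ck_linear_comp: "open U \<Longrightarrow> bounded_linear L \<Longrightarrow> Ck_on k U F \<Longrightarrow> Ck_on k U (\<lambda>x. L (F x))"
proof (induction k arbitrary: F)
  case 0 then show ?case
    using continuous_on_compose[of U F L] linear_continuous_on[OF 0(2)]
    by (simp only: Ck_on.simps o_def continuous_on_subset[OF _ subset_UNIV])
next
  case (Suc k)
  show ?case
  proof (rule Ck_Suc_intro[where F'="\<lambda>x h. L (frechet_derivative F (at x) h)"])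
    show "open U" by fact
    fix x assume "x \<in> U"
    show "((\<lambda>x. L (F x)) has_derivative (\<lambda>h. L (frechet_derivative F (at x) h))) (at x)"
      using bounded_linear.has_derivative[OF Suc.prems(2) Ck_deriv[OF Suc.prems(1,3) \<open>x\<in>U\<close>]] .
  next
    fix b :: 'a assume b: "b \<in> Basis"
    show "Ck_on k U (\<lambda>x. L (frechet_derivative F (at x) b))"
      by (rule Suc.IH[OF Suc.prems(1,2) Ck_derivs[OF Suc.prems(3) b]])
  qed
qed

lemma Ck_sum: assumes "open U" "finite A" "(\<And>i. i \<in> A \<Longrightarrow> Ck_on k U (F i))" shows "Ck_on k U (\<lambda>x. \<Sum>i\<in>A. F i x)"
  using assms(2,3)
proof (induction A rule: finite_induct)
  case empty then show ?case using Ck_const[OF assms(1)] by simp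
next
  case (insert a A)
  have "Ck_on k U (\<lambda>x. F a x + (\<Sum>i\<in>A. F i x))"
    by (rule Ck_add[OF assms(1)]) (use insert in auto)
  then show ?case using insert(1,2) by simp
qed

lemma linear_basis_expand:
  fixes L :: "'a::euclidean_space \<Rightarrow> 'b::real_vector"
  assumes "linear L"
  shows "L y = (\<Sum>i\<in>Basis. (y \<bullet> i) *\<^sub>R L i)"
proof -
  have "L y = L (\<Sum>i\<in>Basis. (y \<bullet> i) *\<^sub>R i)" by (simp only: euclidean_representation)
  also have "\<dots> = (\<Sum>i\<in>Basis. L ((y \<bullet> i) *\<^sub>R i))"
    by (rule linear_sum[OF assms])
  also have "\<dots> = (\<Sum>i\<in>Basis. (y \<bullet> i) *\<^sub>R L i)"
    by (rule sum.cong, rule refl, rule linear_scale[OF assms])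
  finally show ?thesis .
qed

lemma Ck_comp:
  fixes G :: "'b::euclidean_space \<Rightarrow> 'c::real_normed_vector" and H :: "'a::euclidean_space \<Rightarrow> 'b"
  assumes "open U" "open V" "\<And>x. x \<in> U \<Longrightarrow> H x \<in> V"
  shows "Ck_on k V G \<Longrightarrow> Ck_on k U H \<Longrightarrow> Ck_on k U (\<lambda>x. G (H x))"
proof (induction k arbitrary: G)
  case 0
  have "continuous_on U H" "continuous_on V G" using 0 by (simp_all only: Ck_on.simps)
  moreover have "H ` U \<subseteq> V" using assms(3) by blast
  ultimately have "continuous_on U (G \<circ> H)"
    by (intro continuous_on_compose) (auto intro: continuous_on_subset)
  then show ?case by (simp only: Ck_on.simps o_def)
next
  case (Suc k)
  show ?case
  proof (rule Ck_Suc_intro[where F'="\<lambda>x h. \<Sum>i\<in>Basis. (frechet_derivative H (at x) h \<bullet> i) *\<^sub>R frechet_derivative G (at (H x)) i"])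
    show "open U" by fact
    fix x assume x: "x \<in> U"
    have dH: "(H has_derivative frechet_derivative H (at x)) (at x)" by (rule Ck_deriv[OF assms(1) Suc.prems(2) x])
    have dG: "(G has_derivative frechet_derivative G (at (H x))) (at (H x))" by (rule Ck_deriv[OF assms(2) Suc.prems(1) assms(3)[OF x]])
    have lin: "linear (frechet_derivative G (at (H x)))"
      using has_derivative_bounded_linear[OF dG] bounded_linear.linear by blast
    have A: "((G \<circ> H) has_derivative (frechet_derivative G (at (H x)) \<circ> frechet_derivative H (at x))) (at x)"
      by (rule diff_chain_at[OF dH dG])
    have E: "(frechet_derivative G (at (H x)) \<circ> frechet_derivative H (at x)) =
        (\<lambda>h. \<Sum>i\<in>Basis. (frechet_derivative H (at x) h \<bullet> i) *\<^sub>R frechet_derivative G (at (H x)) i)"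
      by (rule ext, simp only: o_def, rule linear_basis_expand[OF lin])
    have E2: "(G \<circ> H) = (\<lambda>x. G (H x))" by (rule ext) (simp only: o_def)
    show "((\<lambda>x. G (H x)) has_derivative (\<lambda>h. \<Sum>i\<in>Basis. (frechet_derivative H (at x) h \<bullet> i) *\<^sub>R frechet_derivative G (at (H x)) i)) (at x)"
      using A unfolding E E2 .
  next
    fix b :: 'a assume b: "b \<in> Basis"
    show "Ck_on k U (\<lambda>x. \<Sum>i\<in>Basis. (frechet_derivative H (at x) b \<bullet> i) *\<^sub>R frechet_derivative G (at (H x)) i)"
    proof (rule Ck_sum[OF assms(1) finite_Basis])
      fix i :: 'b assume i: "i \<in> Basis"
      have 1: "Ck_on k U (\<lambda>x. frechet_derivative H (at x) b \<bullet> i)"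
        by (rule Ck_linear_comp[OF assms(1) bounded_linear_inner_left Ck_derivs[OF Suc.prems(2) b]])
      have 2: "Ck_on k U (\<lambda>x. frechet_derivative G (at (H x)) i)"
        by (rule Suc.IH[OF Ck_derivs[OF Suc.prems(1) i] Ck_mono[OF Suc.prems(2)]])
      show "Ck_on k U (\<lambda>x. (frechet_derivative H (at x) b \<bullet> i) *\<^sub>R frechet_derivative G (at (H x)) i)"
        by (rule Ck_scaleR[OF assms(1) 1 2])
    qed
  qed
qed

lemma Ck_sin_cos: "Ck_on k UNIV (sin :: real \<Rightarrow> real) \<and> Ck_on k UNIV (cos :: real \<Rightarrow> real)"
proof (induction k)
  case 0 then show ?case by (simp only: Ck_on.simps continuous_on_sin continuous_on_cos continuous_on_id)
next
  case (Suc k)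
  have s: "Ck_on (Suc k) UNIV (sin :: real \<Rightarrow> real)"
  proof (rule Ck_Suc_intro[where F'="\<lambda>x h. cos x * h"])
    fix x :: real
    show "(sin has_derivative (\<lambda>h. cos x * h)) (at x)"
      using DERIV_sin[of x] by (simp add: has_field_derivative_def)
  next
    fix b :: real assume "b \<in> Basis"
    then have "b = 1" by (simp add: Basis_real_def)
    then show "Ck_on k UNIV (\<lambda>x. cos x * b)"
      using Ck_cong[of k UNIV cos "\<lambda>x. cos x * b"] Suc.IH by simp
  qed simp
  have c: "Ck_on (Suc k) UNIV (cos :: real \<Rightarrow> real)"
  proof (rule Ck_Suc_intro[where F'="\<lambda>x. (*) (- sin x)"])
    fix x :: real
    show "(cos has_derivative (*) (- sin x)) (at x)"
      using DERIV_cos[of x] by (simp only: has_field_derivative_def)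
  next
    fix b :: real assume "b \<in> Basis"
    then have "b = 1" by (simp add: Basis_real_def)
    have "Ck_on k UNIV (\<lambda>x::real. (-1::real) *\<^sub>R sin x)"
      by (rule Ck_scaleR[OF open_UNIV Ck_const[OF open_UNIV]]) (rule conjunct1[OF Suc.IH])
    then show "Ck_on k UNIV (\<lambda>x. (*) (- sin x) b)"
      using Ck_cong[of k UNIV "\<lambda>x::real. (-1::real) *\<^sub>R sin x" "\<lambda>x. - sin x * b"] \<open>b = 1\<close> by simp
  qed simp
  show ?case using s c by blast
qed

lemma Ck_inverse: "Ck_on k {0<..} (inverse :: real \<Rightarrow> real)"
proof (induction k)
  case 0 then show ?case by (simp only: Ck_on.simps) (auto intro!: continuous_intros)
next
  case (Suc k)
  show ?case
  proof (rule Ck_Suc_intro[where F'="\<lambda>x. (*) (- (inverse x ^ Suc (Suc 0)))"])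
    fix x :: real assume "x \<in> {0<..}"
    then have "x \<noteq> 0" by simp
    show "(inverse has_derivative (*) (- (inverse x ^ Suc (Suc 0)))) (at x)"
      using DERIV_inverse[OF \<open>x \<noteq> 0\<close>, of UNIV] by (simp only: has_field_derivative_def)
  next
    fix b :: real assume "b \<in> Basis"
    then have "b = 1" by (simp add: Basis_real_def)
    have "Ck_on k {0<..} (\<lambda>x::real. (-1::real) *\<^sub>R (inverse x *\<^sub>R inverse x))"
      by (rule Ck_scaleR[OF open_greaterThan Ck_const[OF open_greaterThan] Ck_scaleR[OF open_greaterThan Suc.IH Suc.IH]])
    then show "Ck_on k {0<..} (\<lambda>x. (*) (- (inverse x ^ Suc (Suc 0))) b)"
      using Ck_cong[of k "{0<..}" "\<lambda>x::real. (-1::real) *\<^sub>R (inverse x *\<^sub>R inverse x)" "\<lambda>x. - (inverse x ^ Suc (Suc 0)) * b"] \<open>b = 1\<close>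
      by (simp add: power2_eq_square)
  qed simp
qed

definition Cinf :: "'a::euclidean_space set \<Rightarrow> ('a \<Rightarrow> 'b::real_normed_vector) \<Rightarrow> bool" where
  "Cinf U F \<longleftrightarrow> (\<forall>k. Ck_on k U F)"

lemma Cinf_const: "open U \<Longrightarrow> Cinf U (\<lambda>x. c)"
  by (simp add: Cinf_def Ck_const)

lemma Cinf_id: "open U \<Longrightarrow> Cinf U (\<lambda>x. x)"
  unfolding Cinf_def using Ck_linear[OF _ bounded_linear_ident] by (metis id_def)

lemma Cinf_lin: "open U \<Longrightarrow> bounded_linear L \<Longrightarrow> Cinf U F \<Longrightarrow> Cinf U (\<lambda>x. L (F x))"
  unfolding Cinf_def using Ck_linear_comp by blast

lemma Cinf_fst: "open U \<Longrightarrow> Cinf U F \<Longrightarrow> Cinf U (\<lambda>x. fst (F x))"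
  by (rule Cinf_lin[OF _ bounded_linear_fst])

lemma Cinf_snd: "open U \<Longrightarrow> Cinf U F \<Longrightarrow> Cinf U (\<lambda>x. snd (F x))"
  by (rule Cinf_lin[OF _ bounded_linear_snd])

lemma Cinf_add: "open U \<Longrightarrow> Cinf U F \<Longrightarrow> Cinf U G \<Longrightarrow> Cinf U (\<lambda>x. F x + G x)"
  unfolding Cinf_def using Ck_add by blast

lemma Cinf_scaleR: "open U \<Longrightarrow> Cinf U F \<Longrightarrow> Cinf U G \<Longrightarrow> Cinf U (\<lambda>x. F x *\<^sub>R G x)"
  unfolding Cinf_def using Ck_scaleR by blast

lemma Cinf_mult: "open U \<Longrightarrow> Cinf U F \<Longrightarrow> Cinf U G \<Longrightarrow> Cinf U (\<lambda>x. F x * (G x :: real))"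
  using Cinf_scaleR[of U F G] by simp

lemma Cinf_minus: "open U \<Longrightarrow> Cinf U F \<Longrightarrow> Cinf U (\<lambda>x. - F x)"
  using Cinf_lin[OF _ bounded_linear_minus[OF bounded_linear_ident], of U F] by simp

lemma Cinf_diff: "open U \<Longrightarrow> Cinf U F \<Longrightarrow> Cinf U G \<Longrightarrow> Cinf U (\<lambda>x. F x - G x)"
  using Cinf_add[of U F "\<lambda>x. - G x"] Cinf_minus[of U G] by simp

lemma Cinf_comp: "open U \<Longrightarrow> open V \<Longrightarrow> (\<And>x. x \<in> U \<Longrightarrow> H x \<in> V) \<Longrightarrow> Cinf V G \<Longrightarrow> Cinf U H \<Longrightarrow> Cinf U (\<lambda>x. G (H x))"
  unfolding Cinf_def using Ck_comp by blast

lemma Cinf_sin: "open U \<Longrightarrow> Cinf U F \<Longrightarrow> Cinf U (\<lambda>x. sin (F x :: real))"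
  by (rule Cinf_comp[OF _ open_UNIV _ _]) (auto simp: Cinf_def Ck_sin_cos)

lemma Cinf_cos: "open U \<Longrightarrow> Cinf U F \<Longrightarrow> Cinf U (\<lambda>x. cos (F x :: real))"
  by (rule Cinf_comp[OF _ open_UNIV _ _]) (auto simp: Cinf_def Ck_sin_cos)

lemma Cinf_inverse: "open U \<Longrightarrow> Cinf U F \<Longrightarrow> (\<And>x. x \<in> U \<Longrightarrow> F x > (0::real)) \<Longrightarrow> Cinf U (\<lambda>x. inverse (F x))"
  by (rule Cinf_comp[OF _ open_greaterThan, of U F 0 inverse]) (auto simp: Cinf_def Ck_inverse)

lemma Cinf_divide: "open U \<Longrightarrow> Cinf U F \<Longrightarrow> Cinf U G \<Longrightarrow> (\<And>x. x \<in> U \<Longrightarrow> G x > (0::real)) \<Longrightarrow> Cinf U (\<lambda>x. F x / G x)"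
  using Cinf_mult[of U F "\<lambda>x. inverse (G x)"] Cinf_inverse[of U G] by (simp add: divide_inverse)

lemma Cinf_power: "open U \<Longrightarrow> Cinf U F \<Longrightarrow> Cinf U (\<lambda>x. (F x :: real) ^ n)"
proof (induction n)
  case 0 then show ?case by (simp add: Cinf_const)
next
  case (Suc n) then show ?case using Cinf_mult[of U F "\<lambda>x. F x ^ n"] by simp
qed

lemma Cinf_pair: "open U \<Longrightarrow> Cinf U F \<Longrightarrow> Cinf U G \<Longrightarrow> Cinf U (\<lambda>x. (F x, G x))"
proof -
  assume U: "open U" and F: "Cinf U F" and G: "Cinf U G"
  have 1: "Cinf U (\<lambda>x. (F x, 0))"
    by (rule Cinf_lin[OF U _ F]) (rule bounded_linear_Pair[OF bounded_linear_ident bounded_linear_zero])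
  have 2: "Cinf U (\<lambda>x. (0, G x))"
    by (rule Cinf_lin[OF U _ G]) (rule bounded_linear_Pair[OF bounded_linear_zero bounded_linear_ident])
  show ?thesis using Cinf_add[OF U 1 2] by simp
qed

lemma Cinf_cong: "open U \<Longrightarrow> Cinf U F \<Longrightarrow> (\<And>x. x \<in> U \<Longrightarrow> F x = G x) \<Longrightarrow> Cinf U G"
  unfolding Cinf_def using Ck_cong by blast

lemma Cinf_subset: "open V \<Longrightarrow> V \<subseteq> U \<Longrightarrow> open U \<Longrightarrow> Cinf U F \<Longrightarrow> Cinf V F"
  using Cinf_comp[of V U "\<lambda>x. x" F] Cinf_id[of V] by blast

lemma cos_eq_Re: "cos (\<theta> - c) = Re (cis \<theta> * cis (- c))"
  by (simp add: cis_mult)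

lemma arc_in:
  assumes ab: "a < b" "b \<le> a + 2 * pi" and th: "cis \<theta> \<in> cis ` {a<..<b}"
  shows "cos (\<theta> - (a + b) / 2) > cos ((b - a) / 2)"
proof -
  obtain \<phi> where ph: "\<phi> \<in> {a<..<b}" "cis \<theta> = cis \<phi>" using th by auto
  have "cos (\<theta> - (a + b) / 2) = cos (\<phi> - (a + b) / 2)"
    using cos_eq_Re[of \<theta> "(a+b)/2"] cos_eq_Re[of \<phi> "(a+b)/2"] ph(2) by simp
  also have "\<dots> = cos \<bar>\<phi> - (a + b) / 2\<bar>" by simp
  also have "\<dots> > cos ((b - a) / 2)"
  proof -
    have "a < \<phi>" "\<phi> < b" using ph(1) by auto
    then have h1: "\<bar>\<phi> - (a + b) / 2\<bar> \<le> pi" "\<bar>\<phi> - (a + b) / 2\<bar> < (b - a) / 2"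
      using ab unfolding abs_le_iff abs_less_iff by (auto simp: field_simps)
    show ?thesis using h1 ab by (subst cos_mono_less_eq) auto
  qed
  finally show ?thesis .
qed

lemma arc_out:
  assumes ab: "a < b" "b \<le> a + 2 * pi" and th: "cis \<theta> \<notin> cis ` {a<..<b}"
  shows "cos (\<theta> - (a + b) / 2) \<le> cos ((b - a) / 2)"
proof (rule ccontr)
  assume "\<not> ?thesis"
  then have gt: "cos (\<theta> - (a + b) / 2) > cos ((b - a) / 2)" by simp
  define c where "c = (a + b) / 2"
  define \<phi>0 where "\<phi>0 = Arg (cis (\<theta> - c))"
  have cis0: "cis \<phi>0 = cis (\<theta> - c)"
    unfolding \<phi>0_def by (simp add: cis_Arg sgn_div_norm)
  have b0: "- pi < \<phi>0" "\<phi>0 \<le> pi" unfolding \<phi>0_def using Arg_bounded by auto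
  have "cos \<phi>0 = cos (\<theta> - c)" using arg_cong[OF cis0, of Re] by simp
  then have "cos \<bar>\<phi>0\<bar> > cos ((b - a) / 2)" using gt by (simp add: c_def)
  then have "\<bar>\<phi>0\<bar> < (b - a) / 2"
  proof -
    have "\<bar>\<phi>0\<bar> \<le> pi" using b0 by linarith
    moreover have "(b - a) / 2 \<le> pi" "0 \<le> (b - a) / 2" using ab by (auto simp: field_simps)
    ultimately show ?thesis using \<open>cos \<bar>\<phi>0\<bar> > cos ((b - a) / 2)\<close> by (subst (asm) cos_mono_less_eq) auto
  qed
  then have "a < c + \<phi>0" "c + \<phi>0 < b" unfolding c_def abs_less_iff by (auto simp: field_simps)
  then have "c + \<phi>0 \<in> {a<..<b}" by simp
  moreover have "cis (c + \<phi>0) = cis \<theta>" by (simp only: cis_mult[symmetric] cis0) (simp add: cis_mult)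
  ultimately have "cis \<theta> \<in> cis ` {a<..<b}" by (metis image_eqI)
  then show False using th by simp
qed

definition rho :: "real \<Rightarrow> nat \<Rightarrow> real \<Rightarrow> real" where
  "rho q N x = 1 + (x ^ N / (q ^ N + x ^ N)) / 2"

definition sig :: "(real \<times> real \<Rightarrow> real) \<Rightarrow> real \<Rightarrow> nat \<Rightarrow> real \<Rightarrow> real" where
  "sig F q N x = (sin (pi / 2 * F (1, rho q N x))) ^ 2"

lemma sig_bounds: "0 \<le> sig F q N x" "sig F q N x \<le> 1"
proof -
  have "\<bar>sin (pi / 2 * F (1, rho q N x))\<bar> \<le> 1" by (rule abs_sin_le_one)
  then show "0 \<le> sig F q N x" "sig F q N x \<le> 1" unfolding sig_def
    by (simp_all add: abs_square_le_1)
qed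

lemma frac_facts:
  fixes p y :: real assumes "0 < p" "0 \<le> y"
  shows "0 \<le> y / (p + y)" "y / (p + y) \<le> 1" "y / (p + y) \<le> y / p"
    "p \<le> y \<Longrightarrow> 1/2 \<le> y / (p + y)"
proof -
  have d: "0 < p + y" using assms by linarith
  show "0 \<le> y / (p + y)" using d assms by simp
  show "y / (p + y) \<le> 1" using d assms by (simp add: divide_le_eq)
  show "y / (p + y) \<le> y / p" using d assms by (intro divide_left_mono) auto
  show "p \<le> y \<Longrightarrow> 1/2 \<le> y / (p + y)" using d by (simp add: le_divide_eq)
qed

lemma lin1: "(1::real)/2 \<le> u \<Longrightarrow> 5/4 \<le> 1 + u/2" by (simp add: field_simps)
lemma lin2: "(u::real) \<le> v \<Longrightarrow> v \<le> 2*e \<Longrightarrow> 1 + u/2 \<le> 1 + e" by (simp add: field_simps)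

lemma rho_range:
  assumes "0 < q" "0 \<le> x ^ N"
  shows "1 \<le> rho q N x" "rho q N x \<le> 3/2"
proof -
  have qN: "0 < q ^ N" using assms by simp
  define u where "u = x ^ N / (q ^ N + x ^ N)"
  have "0 \<le> u" "u \<le> 1" unfolding u_def using frac_facts(1,2)[OF qN assms(2)] by auto
  moreover have "rho q N x = 1 + u / 2" unfolding rho_def u_def ..
  ultimately show "1 \<le> rho q N x" "rho q N x \<le> 3/2" by argo+
qed

lemma rho_high:
  assumes "0 < q" "q \<le> x"
  shows "5/4 \<le> rho q N x"
proof -
  have qN: "0 < q ^ N" using assms by simp
  have "q ^ N \<le> x ^ N" using assms by (simp add: power_mono)
  moreover have "0 \<le> x ^ N" using assms by simp
  ultimately have "1/2 \<le> x ^ N / (q ^ N + x ^ N)" using frac_facts(4)[OF qN] by blast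
  then show ?thesis unfolding rho_def by (rule lin1)
qed

lemma rho_low:
  assumes "0 < q" "0 \<le> x" "x ^ N \<le> 2 * e * q ^ N"
  shows "rho q N x \<le> 1 + e"
proof -
  have qN: "0 < q ^ N" using assms by simp
  have xN: "0 \<le> x ^ N" using assms by simp
  have "x ^ N / (q ^ N + x ^ N) \<le> x ^ N / q ^ N" by (rule frac_facts(3)[OF qN xN])
  moreover have "x ^ N / q ^ N \<le> 2 * e" using assms(3) qN by (simp add: divide_le_eq)
  ultimately show ?thesis unfolding rho_def by (rule lin2)
qed

lemma sig_one:
  assumes "0 < q" "q \<le> x" "\<And>r. 5/4 \<le> r \<Longrightarrow> r \<le> 11/4 \<Longrightarrow> F (1, r) = 1"
  shows "sig F q N x = 1"
proof -
  have "0 \<le> x ^ N" using assms by simp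
  then have "rho q N x \<le> 3/2" using rho_range(2)[OF assms(1)] by blast
  then have "rho q N x \<le> 11/4" by argo
  then have "F (1, rho q N x) = 1" using assms(3) rho_high[OF assms(1,2)] by blast
  then show ?thesis unfolding sig_def by simp
qed

lemma sig_zero:
  assumes "0 < q" "0 \<le> x" "x ^ N \<le> 2 * e * q ^ N" "\<And>r. 1 \<le> r \<Longrightarrow> r \<le> 1 + e \<Longrightarrow> F (1, r) = 0"
  shows "sig F q N x = 0"
proof -
  have "0 \<le> x ^ N" using assms by simp
  then have "1 \<le> rho q N x" using rho_range(1)[OF assms(1)] by blast
  then have "F (1, rho q N x) = 0" using assms(4) rho_low[OF assms(1,2,3)] by blast
  then show ?thesis unfolding sig_def by simp
qed

lemma arc_bump:
  fixes I P :: "complex set"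
  assumes arc: "open_arc I" and P: "compact P" "P \<subseteq> I" and e: "e > 0"
  obtains q c N where "0 < q" "q < 1"
    "\<And>\<theta>. cis \<theta> \<in> P \<Longrightarrow> q \<le> (1 + cos (\<theta> - c)) / 2"
    "\<And>\<theta>. cis \<theta> \<notin> I \<Longrightarrow> ((1 + cos (\<theta> - c)) / 2) ^ N \<le> 2 * e * q ^ N"
proof -
  obtain a b where ab: "a < b" "b \<le> a + 2 * pi" "I = cis ` {a<..<b}"
    using arc unfolding open_arc_def by blast
  define c where "c = (a + b) / 2"
  define ch where "ch = cos ((b - a) / 2)"
  have ch1: "ch < 1"
  proof -
    have "cos ((b - a) / 2) < cos 0"
      using ab by (subst cos_mono_less_eq) (auto simp: field_simps)
    then show ?thesis unfolding ch_def by simp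
  qed
  have chm: "-1 \<le> ch" unfolding ch_def by simp
  have inP: "Re (\<zeta> * cis (- c)) > ch" if "\<zeta> \<in> P" for \<zeta>
  proof -
    have "\<zeta> \<in> I" using that P by blast
    then obtain \<theta> where th: "\<theta> \<in> {a<..<b}" "\<zeta> = cis \<theta>" using ab by auto
    have "cos (\<theta> - c) > ch" unfolding c_def ch_def
      using arc_in[OF ab(1,2)] th by blast
    then show ?thesis using th cos_eq_Re by metis
  qed
  obtain m where m: "m > ch" "\<And>\<zeta>. \<zeta> \<in> P \<Longrightarrow> m \<le> Re (\<zeta> * cis (- c))"
  proof (cases "P = {}")
    case True then show ?thesis using that[of 1] ch1 by auto
  next
    case False
    have "continuous_on P (\<lambda>\<zeta>. Re (\<zeta> * cis (- c)))" by (intro continuous_intros)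
    then obtain \<zeta>0 where "\<zeta>0 \<in> P" "\<And>\<zeta>. \<zeta> \<in> P \<Longrightarrow> Re (\<zeta>0 * cis (- c)) \<le> Re (\<zeta> * cis (- c))"
      using continuous_attains_inf[OF P(1) False] by blast
    then show ?thesis using that[of "Re (\<zeta>0 * cis (- c))"] inP by blast
  qed
  define kk where "kk = min m ((1 + ch) / 2)"
  have kk: "ch < kk" "kk < 1" unfolding kk_def using m(1) ch1 by (auto simp: field_simps min_def)
  define q where "q = (1 + kk) / 2"
  define x0 where "x0 = (1 + ch) / 2"
  have q: "0 < q" "q < 1" "x0 < q" "0 \<le> x0" unfolding q_def x0_def using kk chm by (auto simp: field_simps)
  obtain N where N: "(x0 / q) ^ N < 2 * e"
    using real_arch_pow_inv[of "2 * e" "x0 / q"] q e by (auto simp: field_simps)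
  show ?thesis
  proof (rule that[of q c N])
    show "0 < q" "q < 1" by (fact q(1), fact q(2))
  next
    fix \<theta> assume "cis \<theta> \<in> P"
    then have "m \<le> cos (\<theta> - c)" using m(2) cos_eq_Re by metis
    then have "kk \<le> cos (\<theta> - c)" unfolding kk_def by linarith
    then show "q \<le> (1 + cos (\<theta> - c)) / 2" unfolding q_def by (simp add: field_simps)
  next
    fix \<theta> assume "cis \<theta> \<notin> I"
    then have "cos (\<theta> - c) \<le> ch" unfolding c_def ch_def using arc_out[OF ab(1,2)] ab(3) by blast
    then have x1: "(1 + cos (\<theta> - c)) / 2 \<le> x0"
      unfolding x0_def by (intro divide_right_mono add_left_mono) auto
    have "0 \<le> 1 + cos (\<theta> - c)" using cos_ge_minus_one[of "\<theta> - c"] by linarith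
    then have x2: "0 \<le> (1 + cos (\<theta> - c)) / 2" by simp
    note x = x1 x2
    have "((1 + cos (\<theta> - c)) / 2) ^ N \<le> x0 ^ N" using x by (intro power_mono) auto
    also have "\<dots> = (x0 / q) ^ N * q ^ N" using q by (simp add: power_divide)
    also have "\<dots> \<le> 2 * e * q ^ N" using N q by (intro mult_right_mono) auto
    finally show "((1 + cos (\<theta> - c)) / 2) ^ N \<le> 2 * e * q ^ N" .
  qed
qed

definition psi :: "real \<Rightarrow> real \<Rightarrow> real \<Rightarrow> real" where
  "psi k c \<theta> = - sin (\<theta> - c) / (1 - k * cos (\<theta> - c))"
definition dpsi :: "real \<Rightarrow> real \<Rightarrow> real \<Rightarrow> real" where
  "dpsi k c \<theta> = (k - cos (\<theta> - c)) / (1 - k * cos (\<theta> - c)) ^ 2"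

lemma den_bounds:
  fixes x :: real
  assumes "0 < k" "k < 1"
  shows "1 - k \<le> 1 - k * cos x" "1 - k * cos x \<le> 1 + k" "0 < 1 - k * cos x"
proof -
  have a: "k * cos x \<le> k * 1" by (rule mult_left_mono[OF cos_le_one]) (use assms in simp)
  have b: "k * (-1) \<le> k * cos x" by (rule mult_left_mono[OF cos_ge_minus_one]) (use assms in simp)
  show "1 - k \<le> 1 - k * cos x" using a by linarith
  show "1 - k * cos x \<le> 1 + k" using b by linarith
  show "0 < 1 - k * cos x" using a assms by linarith
qed

lemma psi_deriv:
  assumes "0 < k" "k < 1"
  shows "(psi k c has_real_derivative dpsi k c \<theta>) (at \<theta>)"
proof -
  have d: "1 - k * cos (\<theta> - c) \<noteq> 0" using den_bounds(3)[OF assms, of "\<theta> - c"] by (metis less_irrefl)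
  have A: "((\<lambda>\<theta>. sin (\<theta> - c)) has_real_derivative cos (\<theta> - c)) (at \<theta>)"
    by (rule derivative_eq_intros refl | simp)+
  have A': "((\<lambda>\<theta>. - sin (\<theta> - c)) has_real_derivative - cos (\<theta> - c)) (at \<theta>)"
    using DERIV_minus[OF A] .
  have B: "((\<lambda>\<theta>. 1 - k * cos (\<theta> - c)) has_real_derivative k * sin (\<theta> - c)) (at \<theta>)"
    by (rule derivative_eq_intros refl | simp)+
  have "((\<lambda>\<theta>. - sin (\<theta> - c) / (1 - k * cos (\<theta> - c))) has_real_derivative
     ((- cos (\<theta> - c)) * (1 - k * cos (\<theta> - c)) - (- sin (\<theta> - c)) * (k * sin (\<theta> - c)))
       / ((1 - k * cos (\<theta> - c)) * (1 - k * cos (\<theta> - c)))) (at \<theta>)"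
    by (rule DERIV_divide[OF A' B d])
  moreover have "((- cos (\<theta> - c)) * (1 - k * cos (\<theta> - c)) - (- sin (\<theta> - c)) * (k * sin (\<theta> - c)))
       / ((1 - k * cos (\<theta> - c)) * (1 - k * cos (\<theta> - c))) = dpsi k c \<theta>"
  proof -
    have e: "sin (\<theta> - c) * sin (\<theta> - c) = 1 - cos (\<theta> - c) * cos (\<theta> - c)"
      using sin_cos_squared_add3[of "\<theta> - c"] by linarith
    have "(- cos (\<theta> - c)) * (1 - k * cos (\<theta> - c)) - (- sin (\<theta> - c)) * (k * sin (\<theta> - c))
        = k - cos (\<theta> - c)" using e by algebra
    then show ?thesis unfolding dpsi_def by (simp add: power2_eq_square)
  qed
  ultimately show ?thesis unfolding psi_def[abs_def] by simp
qed

lemma psi_bound: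
  assumes "0 < k" "k < 1"
  shows "\<bar>psi k c \<theta>\<bar> \<le> 1 / (1 - k)"
proof -
  have d: "1 - k \<le> 1 - k * cos (\<theta> - c)" "0 < 1 - k" using den_bounds[OF assms, of "\<theta> - c"] assms by auto
  have "\<bar>psi k c \<theta>\<bar> = \<bar>sin (\<theta> - c)\<bar> / (1 - k * cos (\<theta> - c))"
    unfolding psi_def using d by (simp add: abs_divide)
  also have "\<dots> \<le> 1 / (1 - k * cos (\<theta> - c))"
    using d by (intro divide_right_mono) auto
  also have "\<dots> \<le> 1 / (1 - k)" using d by (intro divide_left_mono) auto
  finally show ?thesis .
qed

lemma dpsi_bound:
  assumes "0 < k" "k < 1"
  shows "\<bar>dpsi k c \<theta>\<bar> \<le> 2 / (1 - k) ^ 2"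
proof -
  have d: "1 - k \<le> 1 - k * cos (\<theta> - c)" "0 < 1 - k" using den_bounds[OF assms, of "\<theta> - c"] assms by auto
  have n: "\<bar>k - cos (\<theta> - c)\<bar> \<le> 2" using assms abs_cos_le_one[of "\<theta> - c"] by linarith
  have sq: "(1 - k) ^ 2 \<le> (1 - k * cos (\<theta> - c)) ^ 2" using d by (intro power_mono) auto
  have "\<bar>dpsi k c \<theta>\<bar> = \<bar>k - cos (\<theta> - c)\<bar> / (1 - k * cos (\<theta> - c)) ^ 2"
    unfolding dpsi_def by (simp add: abs_divide)
  also have "\<dots> \<le> 2 / (1 - k * cos (\<theta> - c)) ^ 2"
    using n by (intro divide_right_mono) auto
  also have "\<dots> \<le> 2 / (1 - k) ^ 2" using d sq by (intro divide_left_mono) auto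
  finally show ?thesis .
qed

lemma dpsi_pos:
  assumes "0 < k" "k < 1" "cos (\<theta> - c) \<le> kk" "kk < k"
  shows "(k - kk) / 4 \<le> dpsi k c \<theta>"
proof -
  have d: "0 < 1 - k * cos (\<theta> - c)" "1 - k * cos (\<theta> - c) \<le> 2" using den_bounds[OF assms(1,2), of "\<theta> - c"] assms by auto
  have sq: "(1 - k * cos (\<theta> - c)) ^ 2 \<le> 4"
  proof -
    have "(1 - k * cos (\<theta> - c)) ^ 2 \<le> 2 ^ 2" using d by (intro power_mono) auto
    then show ?thesis by simp
  qed
  have n: "k - kk \<le> k - cos (\<theta> - c)" using assms by linarith
  have "(k - kk) / 4 \<le> (k - kk) / (1 - k * cos (\<theta> - c)) ^ 2"
    using d sq assms by (intro divide_left_mono) auto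
  also have "\<dots> \<le> (k - cos (\<theta> - c)) / (1 - k * cos (\<theta> - c)) ^ 2"
    using n d by (intro divide_right_mono) auto
  finally show ?thesis unfolding dpsi_def .
qed

lemma D_bound:
  fixes s G P M ps dp B B' e cc kap m :: real
  assumes s: "0 \<le> s" "s \<le> 1" and G: "0 \<le> G" and P: "0 \<le> P" "P \<le> M"
    and ps: "\<bar>ps\<bar> \<le> B" and dp: "\<bar>dp\<bar> \<le> B'" and e: "0 < e" "e * B \<le> 1/2" "e * B' * M \<le> cc / 4"
    and cases: "cc \<le> s \<or> (kap \<le> dp \<and> m \<le> G / 2 + e * kap * P)"
  shows "min (cc / 4) (min m (1/2)) \<le> ((1 - s) * G + s) * (1 + e * ps) + e * dp * (1 - s) * P"
proof -
  define A where "A = (1 - s) * G + s"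
  have A0: "0 \<le> A" unfolding A_def using s G by simp
  have "\<bar>e * ps\<bar> \<le> e * B" using e ps by (simp add: abs_mult mult_left_mono)
  then have eps: "1/2 \<le> 1 + e * ps" using e by linarith
  have T1: "A / 2 \<le> A * (1 + e * ps)"
  proof -
    have "A * (1/2) \<le> A * (1 + e * ps)" using A0 eps by (rule mult_left_mono[rotated])
    then show ?thesis by simp
  qed
  show ?thesis
  proof (cases "cc \<le> s")
    case True
    have As: "cc \<le> A" unfolding A_def using s G True by (smt (verit) mult_nonneg_nonneg)
    have "\<bar>e * dp * (1 - s) * P\<bar> = e * \<bar>dp\<bar> * (1 - s) * P" using e s P by (simp add: abs_mult)
    also have "\<dots> \<le> e * B' * 1 * M"
      using e s P dp by (intro mult_mono) auto
    finally have "\<bar>e * dp * (1 - s) * P\<bar> \<le> cc / 4" using e by simp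
    then have "- (cc / 4) \<le> e * dp * (1 - s) * P" by linarith
    moreover have "cc / 2 \<le> A / 2" using As by simp
    ultimately have "cc / 4 \<le> A * (1 + e * ps) + e * dp * (1 - s) * P" using T1 by linarith
    then show ?thesis unfolding A_def by linarith
  next
    case False
    then have c2: "kap \<le> dp" "m \<le> G / 2 + e * kap * P" using cases by auto
    have sP: "0 \<le> (1 - s) * P" using s P by simp
    have "e * kap * ((1 - s) * P) \<le> e * dp * ((1 - s) * P)"
      using c2(1) e sP by (intro mult_right_mono mult_left_mono) auto
    then have T2: "e * kap * (1 - s) * P \<le> e * dp * (1 - s) * P" by (simp add: mult.assoc)
    have "(1 - s) * m \<le> (1 - s) * (G / 2 + e * kap * P)" using c2(2) s by (intro mult_left_mono) auto
    moreover have "A / 2 + e * kap * (1 - s) * P = (1 - s) * (G / 2 + e * kap * P) + s / 2"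
      unfolding A_def by (simp add: field_simps)
    moreover have "min m (1/2) \<le> (1 - s) * m + s * (1/2)"
    proof -
      have "(1 - s) * min m (1/2) \<le> (1 - s) * m" using s by (intro mult_left_mono) auto
      moreover have "s * min m (1/2) \<le> s * (1/2)" using s by (intro mult_left_mono) auto
      ultimately show ?thesis by (simp add: algebra_simps)
    qed
    ultimately have "min m (1/2) \<le> A * (1 + e * ps) + e * dp * (1 - s) * P" using T1 T2 by linarith
    then show ?thesis unfolding A_def by linarith
  qed
qed

definition alf :: "(real \<times> real \<Rightarrow> real) \<Rightarrow> real \<Rightarrow> real" where
  "alf Gf t = t + (1 - t) * sig Gf 1 2 t"
definition bef :: "(real \<times> real \<Rightarrow> real) \<Rightarrow> real \<Rightarrow> real" where
  "bef Gf t = 1 - sig Gf 1 2 (2 - t)"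
definition muf :: "(real \<times> real \<Rightarrow> real) \<Rightarrow> real \<Rightarrow> nat \<Rightarrow> real \<Rightarrow> real \<Rightarrow> nat \<Rightarrow> real \<Rightarrow> real \<Rightarrow> real" where
  "muf Gf q1 N1 c1 q2 N2 c2 \<theta> = sig Gf q1 N1 ((1 + cos (\<theta> - c1)) / 2) + sig Gf q2 N2 ((1 + cos (\<theta> - c2)) / 2)"
definition Sf :: "(real \<times> real \<Rightarrow> real) \<Rightarrow> (real \<Rightarrow> real) \<Rightarrow> real \<Rightarrow> real \<Rightarrow> real" where
  "Sf Gf mu t \<theta> = alf Gf t * mu \<theta> + bef Gf t * (1 - mu \<theta>)"
definition Xf :: "(real \<times> real \<Rightarrow> real) \<Rightarrow> (real \<times> real \<Rightarrow> real) \<Rightarrow> (real \<Rightarrow> real) \<Rightarrow> real \<Rightarrow> real \<times> real \<times> real \<Rightarrow> real \<times> real \<times> real" where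
  "Xf Gf Gg mu t p = ((1 - Sf Gf mu t (fst (snd p))) * Gg (fst p, snd (snd p)) + Sf Gf mu t (fst (snd p)),
      (1 - Sf Gf mu t (fst (snd p))) * Gf (fst p, snd (snd p)), 0)"

lemma Cinf_sig:
  assumes U: "open U" and Uf: "open Uf" "Cinf Uf Gf" "{-2..2} \<times> {1..3} \<subseteq> Uf"
    and q: "0 < q" and H: "Cinf U H" "\<And>x. x \<in> U \<Longrightarrow> 0 \<le> H x ^ N"
  shows "Cinf U (\<lambda>x. sig Gf q N (H x))"
proof -
  have r: "Cinf U (\<lambda>x. rho q N (H x))"
    unfolding rho_def
  proof (intro Cinf_add Cinf_const Cinf_divide Cinf_power H U)
    fix x assume "x \<in> U"
    have "0 < q ^ N" using q by simp
    then show "0 < q ^ N + H x ^ N" by (rule add_pos_nonneg[OF _ H(2)[OF \<open>x \<in> U\<close>]])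
  qed auto
  have p: "Cinf U (\<lambda>x. (1::real, rho q N (H x)))" by (intro Cinf_pair Cinf_const r U)
  have inU: "(1::real, rho q N (H x)) \<in> Uf" if "x \<in> U" for x
  proof -
    have "1 \<le> rho q N (H x)" "rho q N (H x) \<le> 3/2" using rho_range[OF q H(2)[OF that]] by auto
    then have "(1::real, rho q N (H x)) \<in> {-2..2} \<times> {1..3}" by simp
    then show ?thesis using Uf(3) by (rule subsetD[rotated])
  qed
  have g: "Cinf U (\<lambda>x. Gf (1, rho q N (H x)))"
    by (rule Cinf_comp[OF U Uf(1) inU Uf(2) p])
  show ?thesis unfolding sig_def
    by (intro Cinf_power Cinf_sin Cinf_mult Cinf_const g U)
qed

lemma Cinf_alf: "open Uf \<Longrightarrow> Cinf Uf Gf \<Longrightarrow> {-2..2} \<times> {1..3} \<subseteq> Uf \<Longrightarrow> Cinf UNIV (alf Gf)"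
  unfolding alf_def
  by (intro Cinf_add Cinf_id Cinf_mult Cinf_diff Cinf_const Cinf_sig[of UNIV Uf Gf 1 "\<lambda>x. x" 2] open_UNIV Cinf_id) auto

lemma Cinf_bef: "open Uf \<Longrightarrow> Cinf Uf Gf \<Longrightarrow> {-2..2} \<times> {1..3} \<subseteq> Uf \<Longrightarrow> Cinf UNIV (bef Gf)"
  unfolding bef_def
  by (intro Cinf_diff Cinf_const Cinf_sig[of UNIV Uf Gf 1 "\<lambda>x. 2 - x" 2] open_UNIV Cinf_id) auto

lemma Cinf_muf: "open Uf \<Longrightarrow> Cinf Uf Gf \<Longrightarrow> {-2..2} \<times> {1..3} \<subseteq> Uf \<Longrightarrow> 0 < q1 \<Longrightarrow> 0 < q2 \<Longrightarrow>
   Cinf UNIV (muf Gf q1 N1 c1 q2 N2 c2)"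
proof -
  assume a: "open Uf" "Cinf Uf Gf" "{-2..2} \<times> {1..3} \<subseteq> Uf" "0 < q1" "0 < q2"
  have nn: "0 \<le> ((1 + cos (x - c)) / 2) ^ N" for x c :: real and N
  proof -
    have "0 \<le> 1 + cos (x - c)" using cos_ge_minus_one[of "x - c"] by linarith
    then show ?thesis by simp
  qed
  have h: "Cinf UNIV (\<lambda>x. (1 + cos (x - c)) / 2)" for c :: real
    by (intro Cinf_divide Cinf_add Cinf_const Cinf_cos Cinf_diff Cinf_id open_UNIV) auto
  show ?thesis unfolding muf_def
    by (intro Cinf_add Cinf_sig[OF open_UNIV a(1,2,3)] a(4,5) h nn open_UNIV)
qed

definition Odom :: "real set \<Rightarrow> (real \<times> real) set \<Rightarrow> (real \<times> real \<times> real \<times> real) set" where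
  "Odom T V = {q. fst q \<in> T \<and> (fst (snd q), snd (snd (snd q))) \<in> V}"

lemma open_Odom: "open T \<Longrightarrow> open V \<Longrightarrow> open (Odom T V)"
proof -
  assume T: "open T" and V: "open V"
  have e: "Odom T V = fst -` T \<inter> (\<lambda>q::real \<times> real \<times> real \<times> real. (fst (snd q), snd (snd (snd q)))) -` V"
    unfolding Odom_def by (simp add: set_eq_iff)
  have c: "continuous (at x) (\<lambda>q::real \<times> real \<times> real \<times> real. (fst (snd q), snd (snd (snd q))))" for x
    by (intro continuous_intros)
  show ?thesis unfolding e
    by (rule open_Int[OF open_vimage_fst[OF T] continuous_open_vimage[OF V c]])
qed

lemma Cinf_Xf:
  assumes Uf: "open Uf" "Cinf Uf Gf" "{-2..2} \<times> {1..3} \<subseteq> Uf"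
    and Ug: "open Ug" "Cinf Ug Gg"
    and mu: "Cinf UNIV mu"
  shows "Cinf (Odom UNIV (Uf \<inter> Ug)) (\<lambda>q. Xf Gf Gg mu (fst q) (snd q))"
proof -
  define Om where "Om = Odom UNIV (Uf \<inter> Ug)"
  have Om: "open Om" unfolding Om_def using Uf(1) Ug(1) by (intro open_Odom open_Int) auto
  have al: "Cinf Om (\<lambda>q. alf Gf (fst q))"
    by (rule Cinf_comp[OF Om open_UNIV _ Cinf_alf[OF Uf] Cinf_fst[OF Om Cinf_id[OF Om]]]) auto
  have be: "Cinf Om (\<lambda>q. bef Gf (fst q))"
    by (rule Cinf_comp[OF Om open_UNIV _ Cinf_bef[OF Uf] Cinf_fst[OF Om Cinf_id[OF Om]]]) auto
  have th: "Cinf Om (\<lambda>q. fst (snd (snd q)))" by (intro Cinf_fst Cinf_snd Cinf_id Om)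
  have m: "Cinf Om (\<lambda>q. mu (fst (snd (snd q))))"
    by (rule Cinf_comp[OF Om open_UNIV _ mu th]) auto
  have S: "Cinf Om (\<lambda>q. Sf Gf mu (fst q) (fst (snd (snd q))))"
    unfolding Sf_def by (intro Cinf_add Cinf_mult Cinf_diff Cinf_const al be m Om)
  have zr: "Cinf Om (\<lambda>q. (fst (snd q), snd (snd (snd q))))"
    by (intro Cinf_pair Cinf_fst Cinf_snd Cinf_id Om)
  have inUf: "(fst (snd q), snd (snd (snd q))) \<in> Uf" and inUg: "(fst (snd q), snd (snd (snd q))) \<in> Ug" if "q \<in> Om" for q
    using that unfolding Om_def Odom_def by auto
  have GF: "Cinf Om (\<lambda>q. Gf (fst (snd q), snd (snd (snd q))))"
    by (rule Cinf_comp[OF Om Uf(1) inUf Uf(2) zr])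
  have GG: "Cinf Om (\<lambda>q. Gg (fst (snd q), snd (snd (snd q))))"
    by (rule Cinf_comp[OF Om Ug(1) inUg Ug(2) zr])
  show ?thesis unfolding Om_def[symmetric] Xf_def
    by (intro Cinf_pair Cinf_add Cinf_mult Cinf_diff Cinf_const S GF GG Om)
qed

lemma vd_fst: "(\<gamma> has_vector_derivative v) F \<Longrightarrow> ((\<lambda>s. fst (\<gamma> s)) has_real_derivative fst v) F"
proof -
  assume "(\<gamma> has_vector_derivative v) F"
  then have "(\<gamma> has_derivative (\<lambda>h. h *\<^sub>R v)) F" by (simp add: has_vector_derivative_def)
  then have "((\<lambda>s. fst (\<gamma> s)) has_derivative (\<lambda>h. fst (h *\<^sub>R v))) F" by (rule has_derivative_fst)
  then have "((\<lambda>s. fst (\<gamma> s)) has_vector_derivative fst v) F" by (simp add: has_vector_derivative_def)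
  then show ?thesis by (simp add: has_real_derivative_iff_has_vector_derivative)
qed

lemma vd_snd: "(\<gamma> has_vector_derivative v) F \<Longrightarrow> ((\<lambda>s. snd (\<gamma> s)) has_vector_derivative snd v) F"
proof -
  assume "(\<gamma> has_vector_derivative v) F"
  then have "(\<gamma> has_derivative (\<lambda>h. h *\<^sub>R v)) F" by (simp add: has_vector_derivative_def)
  then have "((\<lambda>s. snd (\<gamma> s)) has_derivative (\<lambda>h. snd (h *\<^sub>R v))) F" by (rule has_derivative_snd)
  then show ?thesis by (simp add: has_vector_derivative_def)
qed

lemma traj_at:
  assumes "is_traj V T \<gamma>" "\<tau> \<in> interior T"
  shows "(\<gamma> has_vector_derivative V (\<gamma> \<tau>)) (at \<tau>)" "\<gamma> \<tau> \<in> Wlift"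
proof -
  have tT: "\<tau> \<in> T" using assms(2) interior_subset by blast
  have d: "(\<gamma> has_vector_derivative V (\<gamma> \<tau>)) (at \<tau> within T)" "\<gamma> \<tau> \<in> Wlift"
    using assms(1) tT unfolding is_traj_def by auto
  show "\<gamma> \<tau> \<in> Wlift" by (fact d(2))
  have "(\<gamma> has_vector_derivative V (\<gamma> \<tau>)) (at \<tau> within interior T)"
    using d(1) interior_subset by (rule has_vector_derivative_within_subset)
  then show "(\<gamma> has_vector_derivative V (\<gamma> \<tau>)) (at \<tau>)"
    using at_within_open[OF assms(2) open_interior] by simp
qed

lemma no_trap:
  fixes V :: "real \<times> real \<times> real \<Rightarrow> real \<times> real \<times> real" and g f :: "real \<Rightarrow> real \<Rightarrow> real" and s :: "real \<Rightarrow> real"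
  assumes V: "\<And>z \<theta> r. (z, \<theta>, r) \<in> Wlift \<Longrightarrow> V (z, \<theta>, r) = ((1 - s \<theta>) * g z r + s \<theta>, (1 - s \<theta>) * f z r, 0)"
    and s0: "\<And>\<theta>. 0 \<le> s \<theta>" and s1: "\<And>\<theta>. s \<theta> \<le> 1"
    and sbig: "\<And>\<theta>. kk \<le> cos (\<theta> - cz) \<Longrightarrow> cc \<le> s \<theta>"
    and cc: "0 < cc" and kk: "-1 < kk" "kk < 1"
    and gnn: "\<And>z r. z \<in> {-2..2} \<Longrightarrow> r \<in> {1..3} \<Longrightarrow> 0 \<le> g z r"
    and zf: "\<And>z r. z \<in> {-2..2} \<Longrightarrow> r \<in> {1..3} \<Longrightarrow> 0 \<le> z * f z r"
    and gz: "\<And>z r. z \<in> {-2..2} \<Longrightarrow> r \<in> {1..3} \<Longrightarrow> g z r = 0 \<Longrightarrow> 0 < z * f z r"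
    and cg: "continuous_on ({-2..2} \<times> {1..3}) (\<lambda>p. g (fst p) (snd p))"
    and cf: "continuous_on ({-2..2} \<times> {1..3}) (\<lambda>p. f (fst p) (snd p))"
  shows "\<not> has_trapped_orbit V"
proof -
  define K where "K = {-2..2::real} \<times> {1..3::real}"
  have K: "compact K" "K \<noteq> {}" unfolding K_def by (auto intro: compact_Times)
  have czf: "continuous_on K (\<lambda>p. fst p * f (fst p) (snd p))"
    unfolding K_def by (intro continuous_intros cf)
  obtain M where M: "0 < M" "\<And>p. p \<in> K \<Longrightarrow> fst p * f (fst p) (snd p) \<le> M"
  proof -
    obtain p0 where "p0 \<in> K" "\<And>p. p \<in> K \<Longrightarrow> fst p * f (fst p) (snd p) \<le> fst p0 * f (fst p0) (snd p0)"
      using continuous_attains_sup[OF K czf] by blast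
    then show ?thesis using that[of "\<bar>fst p0 * f (fst p0) (snd p0)\<bar> + 1"] by force
  qed
  define k where "k = (1 + kk) / 2"
  have k: "0 < k" "k < 1" "kk < k" unfolding k_def using kk by auto
  define B where "B = 1 / (1 - k)"
  define B' where "B' = 2 / (1 - k) ^ 2"
  have BB: "0 < B" "0 < B'" unfolding B_def B'_def using k by auto
  define e where "e = min (1 / (2 * B)) (cc / (4 * B' * M))"
  have e: "0 < e" "e * B \<le> 1/2" "e * B' * M \<le> cc / 4"
  proof -
    show "0 < e" unfolding e_def using BB cc M by auto
    have "e \<le> 1 / (2 * B)" unfolding e_def by simp
    then have "e * B \<le> 1 / (2 * B) * B" using BB by (intro mult_right_mono) auto
    then show "e * B \<le> 1/2" using BB by simp
    have "e \<le> cc / (4 * B' * M)" unfolding e_def by simp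
    then have "e * (B' * M) \<le> cc / (4 * B' * M) * (B' * M)" using BB M by (intro mult_right_mono) auto
    then show "e * B' * M \<le> cc / 4" using BB M by (simp add: mult.assoc)
  qed
  define kap where "kap = (k - kk) / 4"
  have kap: "0 < kap" unfolding kap_def using k by simp
  define h where "h = (\<lambda>p. g (fst p) (snd p) / 2 + e * kap * (fst p * f (fst p) (snd p)))"
  have ch: "continuous_on K h" unfolding h_def K_def by (intro continuous_intros cf cg) auto
  obtain m where m: "0 < m" "\<And>p. p \<in> K \<Longrightarrow> m \<le> h p"
  proof -
    obtain p0 where p0: "p0 \<in> K" "\<And>p. p \<in> K \<Longrightarrow> h p0 \<le> h p"
      using continuous_attains_inf[OF K ch] by blast
    have "0 < h p0"
    proof -
      have dom: "fst p0 \<in> {-2..2}" "snd p0 \<in> {1..3}" using p0(1) unfolding K_def by auto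
      have a: "0 \<le> g (fst p0) (snd p0)" "0 \<le> fst p0 * f (fst p0) (snd p0)" using gnn[OF dom] zf[OF dom] by auto
      have ek: "0 < e * kap" using e kap by simp
      show ?thesis
      proof (cases "g (fst p0) (snd p0) = 0")
        case True
        then have "0 < fst p0 * f (fst p0) (snd p0)" using gz[OF dom] by blast
        then have "0 < e * kap * (fst p0 * f (fst p0) (snd p0))" using ek by simp
        then show ?thesis unfolding h_def using True by simp
      next
        case False
        then have "0 < g (fst p0) (snd p0)" using a by simp
        moreover have "0 \<le> e * kap * (fst p0 * f (fst p0) (snd p0))" using ek a by simp
        ultimately show ?thesis unfolding h_def by simp
      qed
    qed
    then show ?thesis using that p0 by blast
  qed
  define \<delta> where "\<delta> = min (cc / 4) (min m (1/2))"
  have \<delta>: "0 < \<delta>" unfolding \<delta>_def using cc m by simp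
  define L where "L = (\<lambda>p::real \<times> real \<times> real. fst p + e * fst p * psi k cz (fst (snd p)))"
  define Dv where "Dv = (\<lambda>p::real \<times> real \<times> real. ((1 - s (fst (snd p))) * g (fst p) (snd (snd p)) + s (fst (snd p))) *
      (1 + e * psi k cz (fst (snd p))) + e * dpsi k cz (fst (snd p)) * (1 - s (fst (snd p))) * (fst p * f (fst p) (snd (snd p))))"
  have Dbound: "\<delta> \<le> Dv p" if "p \<in> Wlift" for p
  proof -
    obtain z \<theta> r where p: "p = (z, \<theta>, r)" by (metis prod.collapse)
    have dom: "z \<in> {-2..2}" "r \<in> {1..3}" using that p unfolding Wlift_def by auto
    have zK: "(z, r) \<in> K" using dom unfolding K_def by simp
    have cases: "cc \<le> s \<theta> \<or> (kap \<le> dpsi k cz \<theta> \<and> m \<le> g z r / 2 + e * kap * (z * f z r))"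
    proof (cases "kk \<le> cos (\<theta> - cz)")
      case True then show ?thesis using sbig by blast
    next
      case False
      then have "kap \<le> dpsi k cz \<theta>" unfolding kap_def using dpsi_pos[OF k(1,2) _ k(3)] by simp
      moreover have "m \<le> g z r / 2 + e * kap * (z * f z r)" using m(2)[OF zK] unfolding h_def by simp
      ultimately show ?thesis by blast
    qed
    have "\<delta> \<le> ((1 - s \<theta>) * g z r + s \<theta>) * (1 + e * psi k cz \<theta>) + e * dpsi k cz \<theta> * (1 - s \<theta>) * (z * f z r)"
      unfolding \<delta>_def
      by (rule D_bound[OF s0 s1 gnn[OF dom] zf[OF dom] M(2)[OF zK, simplified] _ _ e cases])
        (use psi_bound[OF k(1,2)] dpsi_bound[OF k(1,2)] in \<open>simp_all add: B_def B'_def\<close>)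
    then show ?thesis unfolding Dv_def p by simp
  qed
  have Lbound: "\<bar>L p\<bar> \<le> 3" if "p \<in> Wlift" for p
  proof -
    have z: "\<bar>fst p\<bar> \<le> 2" using that unfolding Wlift_def by auto
    have pb: "\<bar>psi k cz (fst (snd p))\<bar> \<le> B" using psi_bound[OF k(1,2)] unfolding B_def by blast
    have "\<bar>e * psi k cz (fst (snd p))\<bar> = e * \<bar>psi k cz (fst (snd p))\<bar>" using e(1) by (simp add: abs_mult)
    also have "\<dots> \<le> e * B" using pb e(1) by (intro mult_left_mono) auto
    finally have "\<bar>e * psi k cz (fst (snd p))\<bar> \<le> e * B" .
    then have "\<bar>e * psi k cz (fst (snd p))\<bar> \<le> 1/2" using e(2) by linarith
    then have "\<bar>fst p * (e * psi k cz (fst (snd p)))\<bar> \<le> 2 * (1/2)"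
      unfolding abs_mult using z by (intro mult_mono) auto
    moreover have "L p = fst p + fst p * (e * psi k cz (fst (snd p)))" unfolding L_def by (simp add: algebra_simps)
    moreover have "\<bar>fst p + fst p * (e * psi k cz (fst (snd p)))\<bar> \<le> \<bar>fst p\<bar> + \<bar>fst p * (e * psi k cz (fst (snd p)))\<bar>"
      by (rule abs_triangle_ineq)
    ultimately have "\<bar>L p\<bar> \<le> \<bar>fst p\<bar> + 1" by linarith
    then show ?thesis using z by linarith
  qed
  have Lderiv: "((\<lambda>\<tau>. L (\<gamma> \<tau>)) has_real_derivative Dv (\<gamma> \<tau>)) (at \<tau>)"
    if d: "(\<gamma> has_vector_derivative V (\<gamma> \<tau>)) (at \<tau>)" and w: "\<gamma> \<tau> \<in> Wlift" for \<gamma> \<tau>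
  proof -
    obtain z \<theta> r where p: "\<gamma> \<tau> = (z, \<theta>, r)" by (metis prod.collapse)
    have Vv: "V (\<gamma> \<tau>) = ((1 - s \<theta>) * g z r + s \<theta>, (1 - s \<theta>) * f z r, 0)" using V w p by simp
    have zD: "((\<lambda>\<tau>. fst (\<gamma> \<tau>)) has_real_derivative (1 - s \<theta>) * g z r + s \<theta>) (at \<tau>)"
      using vd_fst[OF d] Vv by simp
    have tD: "((\<lambda>\<tau>. fst (snd (\<gamma> \<tau>))) has_real_derivative (1 - s \<theta>) * f z r) (at \<tau>)"
      using vd_fst[OF vd_snd[OF d]] Vv by simp
    have pD: "((\<lambda>\<tau>. psi k cz (fst (snd (\<gamma> \<tau>)))) has_real_derivative dpsi k cz \<theta> * ((1 - s \<theta>) * f z r)) (at \<tau>)"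
      using DERIV_chain2[OF psi_deriv[OF k(1,2), of cz "fst (snd (\<gamma> \<tau>))"] tD] p by simp
    have all: "((\<lambda>\<tau>. fst (\<gamma> \<tau>) + e * fst (\<gamma> \<tau>) * psi k cz (fst (snd (\<gamma> \<tau>)))) has_real_derivative
       ((1 - s \<theta>) * g z r + s \<theta>) + (e * ((1 - s \<theta>) * g z r + s \<theta>) * psi k cz (fst (snd (\<gamma> \<tau>))) +
          dpsi k cz \<theta> * ((1 - s \<theta>) * f z r) * (e * fst (\<gamma> \<tau>)))) (at \<tau>)"
      by (rule DERIV_add[OF zD DERIV_mult[OF DERIV_cmult[OF zD] pD]])
    have eq: "((1 - s \<theta>) * g z r + s \<theta>) + (e * ((1 - s \<theta>) * g z r + s \<theta>) * psi k cz (fst (snd (\<gamma> \<tau>))) +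
          dpsi k cz \<theta> * ((1 - s \<theta>) * f z r) * (e * fst (\<gamma> \<tau>))) = Dv (\<gamma> \<tau>)"
      unfolding Dv_def p by (simp add: algebra_simps)
    show ?thesis using all unfolding eq L_def .
  qed
  show ?thesis
  proof
    assume "has_trapped_orbit V"
    then obtain \<gamma> where "is_traj V {0..} \<gamma> \<or> is_traj V {..0} \<gamma>" unfolding has_trapped_orbit_def by blast
    then show False
    proof
      assume tr: "is_traj V {0..} \<gamma>"
      define T where "T = 1 + 7 / \<delta>"
      have T: "1 \<le> T" unfolding T_def using \<delta> by simp
      have int: "x \<in> interior {0..}" if "1 \<le> x" for x :: real using that by simp
      have "(\<lambda>\<tau>. L (\<gamma> \<tau>) - \<delta> * \<tau>) 1 \<le> (\<lambda>\<tau>. L (\<gamma> \<tau>) - \<delta> * \<tau>) T"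
      proof (rule DERIV_nonneg_imp_nondecreasing[OF T])
        fix x :: real assume x: "1 \<le> x" "x \<le> T"
        have D: "((\<lambda>\<tau>. L (\<gamma> \<tau>)) has_real_derivative Dv (\<gamma> x)) (at x)"
          using Lderiv traj_at[OF tr int[OF x(1)]] by blast
        have "((\<lambda>\<tau>. L (\<gamma> \<tau>) - \<delta> * \<tau>) has_real_derivative Dv (\<gamma> x) - \<delta> * 1) (at x)"
          by (intro DERIV_diff D DERIV_cmult DERIV_ident)
        moreover have "0 \<le> Dv (\<gamma> x) - \<delta> * 1" using Dbound traj_at(2)[OF tr int[OF x(1)]] by simp
        ultimately show "\<exists>y. ((\<lambda>\<tau>. L (\<gamma> \<tau>) - \<delta> * \<tau>) has_real_derivative y) (at x) \<and> 0 \<le> y" by blast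
      qed
      then have "L (\<gamma> 1) - \<delta> + \<delta> * T \<le> L (\<gamma> T)" by simp
      moreover have "\<delta> * T = \<delta> + 7" unfolding T_def using \<delta> by (simp add: algebra_simps)
      moreover have "\<bar>L (\<gamma> 1)\<bar> \<le> 3" "\<bar>L (\<gamma> T)\<bar> \<le> 3"
        using Lbound traj_at(2)[OF tr int] T by auto
      ultimately show False by linarith
    next
      assume tr: "is_traj V {..0} \<gamma>"
      define T where "T = - 1 - 7 / \<delta>"
      have T: "T \<le> -1" unfolding T_def using \<delta> by simp
      have int: "x \<in> interior {..0}" if "x \<le> -1" for x :: real using that by simp
      have "(\<lambda>\<tau>. L (\<gamma> \<tau>) - \<delta> * \<tau>) T \<le> (\<lambda>\<tau>. L (\<gamma> \<tau>) - \<delta> * \<tau>) (-1)"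
      proof (rule DERIV_nonneg_imp_nondecreasing[OF T])
        fix x :: real assume x: "T \<le> x" "x \<le> -1"
        have D: "((\<lambda>\<tau>. L (\<gamma> \<tau>)) has_real_derivative Dv (\<gamma> x)) (at x)"
          using Lderiv traj_at[OF tr int[OF x(2)]] by blast
        have "((\<lambda>\<tau>. L (\<gamma> \<tau>) - \<delta> * \<tau>) has_real_derivative Dv (\<gamma> x) - \<delta> * 1) (at x)"
          by (intro DERIV_diff D DERIV_cmult DERIV_ident)
        moreover have "0 \<le> Dv (\<gamma> x) - \<delta> * 1" using Dbound traj_at(2)[OF tr int[OF x(2)]] by simp
        ultimately show "\<exists>y. ((\<lambda>\<tau>. L (\<gamma> \<tau>) - \<delta> * \<tau>) has_real_derivative y) (at x) \<and> 0 \<le> y" by blast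
      qed
      then have "L (\<gamma> T) - \<delta> * T \<le> L (\<gamma> (-1)) + \<delta>" by simp
      moreover have "\<delta> * T = - \<delta> - 7" unfolding T_def using \<delta> by (simp add: algebra_simps)
      moreover have "\<bar>L (\<gamma> (-1))\<bar> \<le> 3" "\<bar>L (\<gamma> T)\<bar> \<le> 3"
        using Lbound traj_at(2)[OF tr int] T by auto
      ultimately show False by linarith
    qed
  qed
qed

lemma closed_trapped: "has_closed_orbit V \<Longrightarrow> has_trapped_orbit V"
proof -
  assume "has_closed_orbit V"
  then obtain \<gamma> where g: "is_traj V UNIV \<gamma>" unfolding has_closed_orbit_def by blast
  have "is_traj V {0..} \<gamma>" unfolding is_traj_def
  proof
    fix s :: real assume "s \<in> {0..}"
    have "\<gamma> s \<in> Wlift" "(\<gamma> has_vector_derivative V (\<gamma> s)) (at s)" using g unfolding is_traj_def by auto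
    then show "\<gamma> s \<in> Wlift \<and> (\<gamma> has_vector_derivative V (\<gamma> s)) (at s within {0..})"
      using has_vector_derivative_at_within by blast
  qed
  then show ?thesis unfolding has_trapped_orbit_def by blast
qed

lemma Cinf_cont: "Cinf U F \<Longrightarrow> continuous_on U F"
  unfolding Cinf_def using Ck_cont by blast

locale wfacts =
  fixes Gf :: "real \<times> real \<Rightarrow> real" and e :: real
  assumes e: "0 < e"
    and F1: "\<And>r. 5/4 \<le> r \<Longrightarrow> r \<le> 11/4 \<Longrightarrow> Gf (1, r) = 1"
    and F0: "\<And>r. 1 \<le> r \<Longrightarrow> r \<le> 1 + e \<Longrightarrow> Gf (1, r) = 0"
begin

lemma w0: "sig Gf 1 2 0 = 0"
  by (rule sig_zero[where e=e]) (use e F0 in auto)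

lemma w1: "1 \<le> t \<Longrightarrow> sig Gf 1 2 t = 1"
  by (rule sig_one) (use F1 in auto)

lemma alf_0: "alf Gf 0 = 0" unfolding alf_def using w0 by simp
lemma alf_1: "1 \<le> t \<Longrightarrow> alf Gf t = 1" unfolding alf_def using w1 by simp
lemma alf_range: "0 \<le> t \<Longrightarrow> t \<le> 2 \<Longrightarrow> 0 \<le> alf Gf t \<and> alf Gf t \<le> 1"
proof -
  assume t: "0 \<le> t" "t \<le> 2"
  show ?thesis
  proof (cases "1 \<le> t")
    case True then show ?thesis using alf_1 by simp
  next
    case False
    have w: "0 \<le> sig Gf 1 2 t" "sig Gf 1 2 t \<le> 1" by (rule sig_bounds)+
    have "(1 - t) * sig Gf 1 2 t \<le> (1 - t) * 1" using False w by (intro mult_left_mono) auto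
    moreover have "0 \<le> (1 - t) * sig Gf 1 2 t" using False w by simp
    ultimately show ?thesis unfolding alf_def using t by simp
  qed
qed
lemma alf_pos: "0 < t \<Longrightarrow> t \<le> 2 \<Longrightarrow> 0 < alf Gf t"
proof -
  assume t: "0 < t" "t \<le> 2"
  show ?thesis
  proof (cases "1 \<le> t")
    case True then show ?thesis using alf_1 by simp
  next
    case False
    have "0 \<le> (1 - t) * sig Gf 1 2 t" using False sig_bounds(1)[of Gf 1 2 t] by simp
    then show ?thesis unfolding alf_def using t by simp
  qed
qed
lemma bef_0: "t \<le> 1 \<Longrightarrow> bef Gf t = 0" unfolding bef_def using w1[of "2 - t"] by simp
lemma bef_2: "bef Gf 2 = 1" unfolding bef_def using w0 by simp
lemma bef_range: "0 \<le> bef Gf t \<and> bef Gf t \<le> 1" unfolding bef_def using sig_bounds[of Gf 1 2 "2 - t"] by simp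

lemma S_range:
  assumes "0 \<le> t" "t \<le> 2" "0 \<le> m" "m \<le> 1"
  shows "0 \<le> alf Gf t * m + bef Gf t * (1 - m)" "alf Gf t * m + bef Gf t * (1 - m) \<le> 1"
proof -
  have a: "0 \<le> alf Gf t" "alf Gf t \<le> 1" using alf_range assms by auto
  have b: "0 \<le> bef Gf t" "bef Gf t \<le> 1" using bef_range by auto
  show "0 \<le> alf Gf t * m + bef Gf t * (1 - m)" using a b assms by simp
  have "alf Gf t * m \<le> 1 * m" using a assms by (intro mult_right_mono) auto
  moreover have "bef Gf t * (1 - m) \<le> 1 * (1 - m)" using b assms by (intro mult_right_mono) auto
  ultimately show "alf Gf t * m + bef Gf t * (1 - m) \<le> 1" by simp
qed
end

theorem lemma3p3:
  fixes f g :: "real \<Rightarrow> real \<Rightarrow> real"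
    and I1 I2 J1 J2 :: "complex set"
    and D1 D2 E1 E2 :: "(real \<times> complex \<times> real) set"
  assumes f_smooth: "smooth_on_set ({-2..2} \<times> {1..3}) (\<lambda>(z, r). f z r)"
    and g_smooth: "smooth_on_set ({-2..2} \<times> {1..3}) (\<lambda>(z, r). g z r)"
    and f_odd: "\<And>z r. z \<in> {-2..2} \<Longrightarrow> r \<in> {1..3} \<Longrightarrow> f (- z) r = - f z r"
    and g_even: "\<And>z r. z \<in> {-2..2} \<Longrightarrow> r \<in> {1..3} \<Longrightarrow> g (- z) r = g z r"
    and fg_bdry: "\<exists>e>0. \<forall>z\<in>{-2..2}. \<forall>r\<in>{1..3}.
                    (\<bar>z\<bar> \<ge> 2 - e \<or> r \<le> 1 + e \<or> r \<ge> 3 - e) \<longrightarrow> f z r = 0 \<and> g z r = 1"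
    and g_nonneg: "\<And>z r. z \<in> {-2..2} \<Longrightarrow> r \<in> {1..3} \<Longrightarrow> g z r \<ge> 0"
    and g_zero: "\<And>z r. z \<in> {-2..2} \<Longrightarrow> r \<in> {1..3} \<Longrightarrow> g z r = 0 \<longleftrightarrow> (\<bar>z\<bar> = 1 \<and> r = 2)"
    and f_pos: "\<And>z r. z \<in> {0<..2} \<Longrightarrow> r \<in> {1..3} \<Longrightarrow> f z r \<ge> 0"
    and f_one: "\<And>z r. z \<in> {1/4..7/4} \<Longrightarrow> r \<in> {5/4..11/4} \<Longrightarrow> f z r = 1"
    and arcs: "open_arc I1" "open_arc I2" "open_arc J1" "open_arc J2"
    and disj: "I1 \<inter> I2 = {}" "I1 \<inter> J1 = {}" "I1 \<inter> J2 = {}"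
              "I2 \<inter> J1 = {}" "I2 \<inter> J2 = {}" "J1 \<inter> J2 = {}"
    and cpt: "compact D1" "compact D2" "compact E1" "compact E2"
    and D1_sub: "D1 \<subseteq> {-2..2} \<times> I1 \<times> {1..3}"
    and D2_sub: "D2 \<subseteq> {-2..2} \<times> I2 \<times> {1..3}"
    and E1_sub: "E1 \<subseteq> {-2..2} \<times> J1 \<times> {1..3}"
    and E2_sub: "E2 \<subseteq> {-2..2} \<times> J2 \<times> {1..3}"
  shows "\<exists>X :: real \<Rightarrow> real \<times> real \<times> real \<Rightarrow> real \<times> real \<times> real.
     smooth_on_set ({0..2} \<times> Wlift) (\<lambda>(t, p). X t p)
   \<and> (\<forall>t z \<theta> r. X t (z, \<theta> + 2 * pi, r) = X t (z, \<theta>, r))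
   \<and> (\<forall>t\<in>{0..2}. \<forall>p\<in>Wlift. X t p \<noteq> 0)
   \<and> (\<forall>t\<in>{0..2}. \<exists>e>0. \<forall>p\<in>Wlift. near_bdry e p \<longrightarrow> X t p = (1, 0, 0))
   \<and> (\<forall>z \<theta> r. (z, \<theta>, r) \<in> Wlift \<longrightarrow> X 0 (z, \<theta>, r) = (g z r, f z r, 0))
   \<and> (\<forall>p\<in>Wlift. X 2 p = (1, 0, 0))
   \<and> (\<forall>t\<in>{1..2}. \<forall>p\<in>Wlift. Phi p \<in> D1 \<union> D2 \<longrightarrow> X t p = (1, 0, 0))
   \<and> (\<forall>t\<in>{0..1}. \<forall>z \<theta> r. (z, \<theta>, r) \<in> Wlift \<longrightarrow> Phi (z, \<theta>, r) \<in> E1 \<union> E2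
          \<longrightarrow> X t (z, \<theta>, r) = (g z r, f z r, 0))
   \<and> (\<forall>t\<in>{0<..2}. \<not> has_closed_orbit (X t) \<and> \<not> has_trapped_orbit (X t))"
proof -
  obtain e0 where e0: "e0 > 0" and fgb: "\<forall>z\<in>{-2..2}. \<forall>r\<in>{1..3}.
                    (\<bar>z\<bar> \<ge> 2 - e0 \<or> r \<le> 1 + e0 \<or> r \<ge> 3 - e0) \<longrightarrow> f z r = 0 \<and> g z r = 1"
    using fg_bdry by blast
  define e where "e = min e0 1"
  have e: "0 < e" "e \<le> e0" "e \<le> 1" unfolding e_def using e0 by auto
  obtain Uf Gf where Uf: "{-2..2} \<times> {1..3} \<subseteq> Uf" "smooth_open Uf Gf"
      "\<And>x. x \<in> {-2..2} \<times> {1..3} \<Longrightarrow> Gf x = (\<lambda>(z, r). f z r) x"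
    using f_smooth unfolding smooth_on_set_def by blast
  obtain Ug Gg where Ug: "{-2..2} \<times> {1..3} \<subseteq> Ug" "smooth_open Ug Gg"
      "\<And>x. x \<in> {-2..2} \<times> {1..3} \<Longrightarrow> Gg x = (\<lambda>(z, r). g z r) x"
    using g_smooth unfolding smooth_on_set_def by blast
  have Ufo: "open Uf" "Cinf Uf Gf" using Uf(2) unfolding smooth_open_def Cinf_def by auto
  have Ugo: "open Ug" "Cinf Ug Gg" using Ug(2) unfolding smooth_open_def Cinf_def by auto
  have Gfe: "Gf (z, r) = f z r" if "z \<in> {-2..2}" "r \<in> {1..3}" for z r using Uf(3)[of "(z, r)"] that by simp
  have Gge: "Gg (z, r) = g z r" if "z \<in> {-2..2}" "r \<in> {1..3}" for z r using Ug(3)[of "(z, r)"] that by simp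
  have F1: "Gf (1, r) = 1" if "5/4 \<le> r" "r \<le> 11/4" for r
    using Gfe[of 1 r] f_one[of 1 r] that by simp
  have F0: "Gf (1, r) = 0" if "1 \<le> r" "r \<le> 1 + e" for r
  proof -
    have "r \<in> {1..3}" using that e by simp
    then show ?thesis using Gfe[of 1 r] fgb that e by auto
  qed
  interpret W: wfacts Gf e by (unfold_locales) (use e F1 F0 in auto)
  define PD1 where "PD1 = (\<lambda>p. fst (snd p)) ` D1"
  define PD2 where "PD2 = (\<lambda>p. fst (snd p)) ` D2"
  have cPD: "compact PD1" "compact PD2" unfolding PD1_def PD2_def
    by (intro compact_continuous_image continuous_intros cpt)+
  have sPD: "PD1 \<subseteq> I1" "PD2 \<subseteq> I2" unfolding PD1_def PD2_def using D1_sub D2_sub by auto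
  obtain c1 q1 N1 where b1: "0 < q1" "q1 < 1"
    "\<And>\<theta>. cis \<theta> \<in> PD1 \<Longrightarrow> q1 \<le> (1 + cos (\<theta> - c1)) / 2"
    "\<And>\<theta>. cis \<theta> \<notin> I1 \<Longrightarrow> ((1 + cos (\<theta> - c1)) / 2) ^ N1 \<le> 2 * e * q1 ^ N1"
    by (rule arc_bump[OF arcs(1) cPD(1) sPD(1) e(1)], rule that)
  obtain c2 q2 N2 where b2: "0 < q2" "q2 < 1"
    "\<And>\<theta>. cis \<theta> \<in> PD2 \<Longrightarrow> q2 \<le> (1 + cos (\<theta> - c2)) / 2"
    "\<And>\<theta>. cis \<theta> \<notin> I2 \<Longrightarrow> ((1 + cos (\<theta> - c2)) / 2) ^ N2 \<le> 2 * e * q2 ^ N2"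
    by (rule arc_bump[OF arcs(2) cPD(2) sPD(2) e(1)], rule that)
  define m1 where "m1 = (\<lambda>\<theta>. sig Gf q1 N1 ((1 + cos (\<theta> - c1)) / 2))"
  define m2 where "m2 = (\<lambda>\<theta>. sig Gf q2 N2 ((1 + cos (\<theta> - c2)) / 2))"
  define mu where "mu = muf Gf q1 N1 c1 q2 N2 c2"
  have mu_eq: "mu \<theta> = m1 \<theta> + m2 \<theta>" for \<theta> unfolding mu_def muf_def m1_def m2_def by simp
  have nn: "0 \<le> (1 + cos x) / 2" for x :: real
  proof -
    have "0 \<le> 1 + cos x" using cos_ge_minus_one[of x] by linarith
    then show ?thesis by simp
  qed
  have m1z: "m1 \<theta> = 0" if "cis \<theta> \<notin> I1" for \<theta>
    unfolding m1_def by (rule sig_zero[where e=e]) (use b1(1) nn b1(4)[OF that] F0 in auto)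
  have m2z: "m2 \<theta> = 0" if "cis \<theta> \<notin> I2" for \<theta>
    unfolding m2_def by (rule sig_zero[where e=e]) (use b2(1) nn b2(4)[OF that] F0 in auto)
  have m1o: "m1 \<theta> = 1" if "q1 \<le> (1 + cos (\<theta> - c1)) / 2" for \<theta>
    unfolding m1_def by (rule sig_one) (use b1(1) that F1 in auto)
  have m2o: "m2 \<theta> = 1" if "q2 \<le> (1 + cos (\<theta> - c2)) / 2" for \<theta>
    unfolding m2_def by (rule sig_one) (use b2(1) that F1 in auto)
  have mb: "0 \<le> m1 \<theta>" "m1 \<theta> \<le> 1" "0 \<le> m2 \<theta>" "m2 \<theta> \<le> 1" for \<theta>
    unfolding m1_def m2_def by (rule sig_bounds)+
  have mu01: "0 \<le> mu \<theta> \<and> mu \<theta> \<le> 1" for \<theta>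
  proof -
    have "cis \<theta> \<notin> I1 \<or> cis \<theta> \<notin> I2" using disj(1) by blast
    then show ?thesis using m1z m2z mb[of \<theta>] mu_eq[of \<theta>] by auto
  qed
  have mu_big: "mu \<theta> = 1" if "2 * q1 - 1 \<le> cos (\<theta> - c1)" for \<theta>
  proof -
    have "q1 \<le> (1 + cos (\<theta> - c1)) / 2" using that by (simp add: field_simps)
    then have a: "m1 \<theta> = 1" by (rule m1o)
    then have "cis \<theta> \<in> I1" using m1z by force
    then have "cis \<theta> \<notin> I2" using disj(1) by blast
    then show ?thesis using a m2z mu_eq by simp
  qed
  have mu_D: "mu \<theta> = 1" if "(z, cis \<theta>, r) \<in> D1 \<union> D2" for z \<theta> r
  proof (cases "(z, cis \<theta>, r) \<in> D1")
    case True
    then have "cis \<theta> \<in> PD1" unfolding PD1_def by force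
    then have a: "m1 \<theta> = 1" "cis \<theta> \<in> I1" using m1o b1(3) sPD by auto
    then have "cis \<theta> \<notin> I2" using disj(1) by blast
    then show ?thesis using a m2z mu_eq by simp
  next
    case False
    then have "(z, cis \<theta>, r) \<in> D2" using that by blast
    then have "cis \<theta> \<in> PD2" unfolding PD2_def by force
    then have a: "m2 \<theta> = 1" "cis \<theta> \<in> I2" using m2o b2(3) sPD by auto
    then have "cis \<theta> \<notin> I1" using disj(1) by blast
    then show ?thesis using a m1z mu_eq by simp
  qed
  have mu_E: "mu \<theta> = 0" if "(z, cis \<theta>, r) \<in> E1 \<union> E2" for z \<theta> r
  proof -
    have "cis \<theta> \<in> J1 \<or> cis \<theta> \<in> J2" using that E1_sub E2_sub by blast
    then have "cis \<theta> \<notin> I1" "cis \<theta> \<notin> I2" using disj by blast+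
    then show ?thesis using m1z m2z mu_eq by simp
  qed
  have mu_per: "mu (\<theta> + 2 * pi) = mu \<theta>" for \<theta>
  proof -
    have "cos (\<theta> + 2 * pi - c) = cos (\<theta> - c)" for c
    proof -
      have "\<theta> + 2 * pi - c = (\<theta> - c) + 2 * pi" by simp
      then show ?thesis by (simp only: cos_periodic)
    qed
    then show ?thesis unfolding mu_def muf_def by simp
  qed
  have mu_smooth: "Cinf UNIV mu" unfolding mu_def by (rule Cinf_muf[OF Ufo Uf(1) b1(1) b2(1)])
  define X where "X = Xf Gf Gg mu"
  have Xeq: "X t (z, \<theta>, r) = ((1 - Sf Gf mu t \<theta>) * Gg (z, r) + Sf Gf mu t \<theta>, (1 - Sf Gf mu t \<theta>) * Gf (z, r), 0)"
    for t z \<theta> r unfolding X_def Xf_def by simp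
  have Xeq2: "X t (z, \<theta>, r) = ((1 - Sf Gf mu t \<theta>) * g z r + Sf Gf mu t \<theta>, (1 - Sf Gf mu t \<theta>) * f z r, 0)"
    if "(z, \<theta>, r) \<in> Wlift" for t z \<theta> r
    using that Xeq Gfe Gge unfolding Wlift_def by auto
  have S01: "0 \<le> Sf Gf mu t \<theta>" "Sf Gf mu t \<theta> \<le> 1" if "0 \<le> t" "t \<le> 2" for t \<theta>
    unfolding Sf_def using W.S_range[OF that] mu01 by auto
  show ?thesis
  proof (intro exI[of _ X] conjI ballI allI impI)
    show "smooth_on_set ({0..2} \<times> Wlift) (\<lambda>(t, p). X t p)"
      unfolding smooth_on_set_def
    proof (intro exI conjI)
      show "{0..2} \<times> Wlift \<subseteq> Odom UNIV (Uf \<inter> Ug)"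
        using Uf(1) Ug(1) unfolding Wlift_def Odom_def by auto
      show "smooth_open (Odom UNIV (Uf \<inter> Ug)) (\<lambda>q. Xf Gf Gg mu (fst q) (snd q))"
        unfolding smooth_open_def
        using Cinf_Xf[OF Ufo Uf(1) Ugo mu_smooth] open_Odom[OF open_UNIV open_Int[OF Ufo(1) Ugo(1)]]
        unfolding Cinf_def by blast
      show "\<forall>x\<in>{0..2} \<times> Wlift. Xf Gf Gg mu (fst x) (snd x) = (case x of (t, p) \<Rightarrow> X t p)"
        unfolding X_def by auto
    qed
  next
    fix t z \<theta> r
    show "X t (z, \<theta> + 2 * pi, r) = X t (z, \<theta>, r)" unfolding Xeq Sf_def mu_per ..
  next
    fix t :: real and p assume t: "t \<in> {0..2}" and p: "p \<in> Wlift"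
    obtain z \<theta> r where pz: "p = (z, \<theta>, r)" by (metis prod.collapse)
    have dom: "z \<in> {-2..2}" "r \<in> {1..3}" using p pz unfolding Wlift_def by auto
    define s where "s = Sf Gf mu t \<theta>"
    have s: "0 \<le> s" "s \<le> 1" unfolding s_def using S01 t by auto
    show "X t p \<noteq> 0"
    proof
      assume X0: "X t p = 0"
      have c1: "(1 - s) * g z r + s = 0" and c2: "(1 - s) * f z r = 0"
        using X0 Xeq2[of z \<theta> r t] p pz unfolding s_def by (auto simp: zero_prod_def)
      have "0 \<le> (1 - s) * g z r" using s g_nonneg[OF dom] by simp
      then have s0: "s = 0" using c1 s by linarith
      then have "g z r = 0" using c1 by simp
      then have zr: "\<bar>z\<bar> = 1" "r = 2" using g_zero[OF dom] by auto
      have "f 1 2 = 1" using f_one by simp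
      moreover have "f (-1) 2 = - f 1 2" using f_odd[of 1 2] by simp
      ultimately have "f z r \<noteq> 0" using zr by (auto simp: abs_if split: if_splits)
      then show False using c2 s0 by simp
    qed
  next
    fix t :: real assume t: "t \<in> {0..2}"
    show "\<exists>e>0. \<forall>p\<in>Wlift. near_bdry e p \<longrightarrow> X t p = (1, 0, 0)"
    proof (intro exI[of _ e0] conjI ballI impI)
      show "0 < e0" by (fact e0)
      fix p assume p: "p \<in> Wlift" and nb: "near_bdry e0 p"
      obtain z \<theta> r where pz: "p = (z, \<theta>, r)" by (metis prod.collapse)
      have dom: "z \<in> {-2..2}" "r \<in> {1..3}" using p pz unfolding Wlift_def by auto
      have "f z r = 0 \<and> g z r = 1" using fgb dom nb pz unfolding near_bdry_def by auto
      then show "X t p = (1, 0, 0)" using Xeq2 p pz by simp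
    qed
  next
    fix z \<theta> r assume p: "(z, \<theta>, r) \<in> Wlift"
    have "Sf Gf mu 0 \<theta> = 0" unfolding Sf_def using W.alf_0 W.bef_0[of 0] by simp
    then show "X 0 (z, \<theta>, r) = (g z r, f z r, 0)" using Xeq2[OF p] by simp
  next
    fix p :: "real \<times> real \<times> real" assume "p \<in> Wlift"
    obtain z \<theta> r where pz: "p = (z, \<theta>, r)" by (metis prod.collapse)
    have "Sf Gf mu 2 \<theta> = 1" unfolding Sf_def using W.alf_1[of 2] W.bef_2 by simp
    then show "X 2 p = (1, 0, 0)" using Xeq pz by simp
  next
    fix t :: real and p assume t: "t \<in> {1..2}" and p: "p \<in> Wlift" and D: "Phi p \<in> D1 \<union> D2"
    obtain z \<theta> r where pz: "p = (z, \<theta>, r)" by (metis prod.collapse)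
    have "mu \<theta> = 1" using mu_D D pz unfolding Phi_def by simp
    then have "Sf Gf mu t \<theta> = 1" unfolding Sf_def using W.alf_1[of t] t by simp
    then show "X t p = (1, 0, 0)" using Xeq pz by simp
  next
    fix t :: real and z \<theta> r assume t: "t \<in> {0..1}" and p: "(z, \<theta>, r) \<in> Wlift" and E: "Phi (z, \<theta>, r) \<in> E1 \<union> E2"
    have "mu \<theta> = 0" using mu_E E unfolding Phi_def by simp
    then have "Sf Gf mu t \<theta> = 0" unfolding Sf_def using W.bef_0[of t] t by simp
    then show "X t (z, \<theta>, r) = (g z r, f z r, 0)" using Xeq2[OF p] by simp
  next
    fix t :: real assume t: "t \<in> {0<..2}"
    have nt: "\<not> has_trapped_orbit (X t)"
    proof (rule no_trap[where s="Sf Gf mu t" and g=g and f=f and kk="2 * q1 - 1" and cz=c1 and cc="alf Gf t"])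
      show "\<And>z \<theta> r. (z, \<theta>, r) \<in> Wlift \<Longrightarrow> X t (z, \<theta>, r) = ((1 - Sf Gf mu t \<theta>) * g z r + Sf Gf mu t \<theta>, (1 - Sf Gf mu t \<theta>) * f z r, 0)"
        by (rule Xeq2)
      show "\<And>\<theta>. 0 \<le> Sf Gf mu t \<theta>" "\<And>\<theta>. Sf Gf mu t \<theta> \<le> 1" using S01 t by auto
      show "\<And>\<theta>. 2 * q1 - 1 \<le> cos (\<theta> - c1) \<Longrightarrow> alf Gf t \<le> Sf Gf mu t \<theta>"
        unfolding Sf_def using mu_big by simp
      show "0 < alf Gf t" using W.alf_pos t by simp
      show "-1 < 2 * q1 - 1" "2 * q1 - 1 < 1" using b1 by auto
      show "\<And>z r. z \<in> {-2..2} \<Longrightarrow> r \<in> {1..3} \<Longrightarrow> 0 \<le> g z r" by (rule g_nonneg)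
      show "\<And>z r. z \<in> {-2..2} \<Longrightarrow> r \<in> {1..3} \<Longrightarrow> 0 \<le> z * f z r"
      proof -
        fix z r :: real assume dom: "z \<in> {-2..2}" "r \<in> {1..3}"
        show "0 \<le> z * f z r"
        proof (cases "0 \<le> z")
          case True
          then show ?thesis
          proof (cases "z = 0")
            case False then have "0 \<le> f z r" using f_pos dom True by auto
            then show ?thesis using True by simp
          qed simp
        next
          case False
          then have "0 \<le> f (- z) r" using f_pos dom by auto
          moreover have "f (- z) r = - f z r" using f_odd dom by blast
          ultimately have "f z r \<le> 0" by simp
          then show ?thesis using False by (simp add: mult_nonpos_nonpos)
        qed
      qed
      show "\<And>z r. z \<in> {-2..2} \<Longrightarrow> r \<in> {1..3} \<Longrightarrow> g z r = 0 \<Longrightarrow> 0 < z * f z r"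
      proof -
        fix z r :: real assume dom: "z \<in> {-2..2}" "r \<in> {1..3}" and gz: "g z r = 0"
        then have zr: "\<bar>z\<bar> = 1" "r = 2" using g_zero[OF dom] by auto
        have f1: "f 1 2 = 1" using f_one by simp
        moreover have "f (-1) 2 = - f 1 2" using f_odd[of 1 2] by simp
        ultimately show "0 < z * f z r" using zr by (auto simp: abs_if split: if_splits)
      qed
      have cGg: "continuous_on ({-2..2} \<times> {1..3}) Gg"
        using continuous_on_subset[OF Cinf_cont[OF Ugo(2)] Ug(1)] .
      show "continuous_on ({-2..2} \<times> {1..3}) (\<lambda>p. g (fst p) (snd p))"
        by (rule continuous_on_cong[THEN iffD1, OF refl _ cGg]) (use Gge in auto)
      have cGf: "continuous_on ({-2..2} \<times> {1..3}) Gf"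
        using continuous_on_subset[OF Cinf_cont[OF Ufo(2)] Uf(1)] .
      show "continuous_on ({-2..2} \<times> {1..3}) (\<lambda>p. f (fst p) (snd p))"
        by (rule continuous_on_cong[THEN iffD1, OF refl _ cGf]) (use Gfe in auto)
    qed
    show "\<not> has_closed_orbit (X t)" using nt closed_trapped by blast
    show "\<not> has_trapped_orbit (X t)" by (fact nt)
  qed
qed

end
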